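(* Let $K,n,L\in\mathbb{N}_+$, $N=nK$, $d=N$, and let $X\in\mathbb{R}^{d\times d}$ be orthogonal and $Y=I_K\otimes\mathbf{1}_n^\top\in\mathbb{R}^{K\times N}$. Let $W_l\in\mathbb{R}^{d\times d}$ for $l\in[L-1]$ and $W_L\in\mathbb{R}^{K\times d}$ satisfy $W_{L:1}X=Y$, and suppose there is $\varepsilon>0$ with $$\varepsilon\le\min\Big\{\frac{n^{1/(2L)}}{\sqrt{30}\,L\,(d-K)^{1/4}},\ \frac{(n/2)^{1/(4L)}}{(d-K)^{1/4}},\ \frac{1}{\sqrt{2(\sqrt K+1)}}\Big\}$$ such that $W_{l+1}^\top W_{l+1}=W_lW_l^\top$ for all $l\in[L-2]$ and $\|W_L^\top W_L-W_{L-1}W_{L-1}^\top\|_F\le\varepsilon^2\sqrt{d-K}$. Then for all $l\in[L]$, $$\big(\sqrt{n/2}\big)^{1/L}\le\sigma_K(W_l)\le\sigma_1(W_l)\le\big(\sqrt{2n}\big)^{1/L}.$$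
   Context: $W_{L:1}=W_L\cdots W_1$; $\sigma_i(A)$ denotes the $i$-th largest singular value of $A$; $\mathbf{1}_n$ is the all-ones vector in $\mathbb{R}^n$ and $\otimes$ the Kronecker product (so $Y$ is the one-hot label matrix of $K$ balanced classes with $n$ samples each, ordered by class). We assume $d>K$. *)

theory Defs
  imports "Jordan_Normal_Form.Char_Poly" "HOL-Computational_Algebra.Polynomial"
    "HOL-Library.Multiset" Complex_Main
begin

definition singular_values :: "real mat \<Rightarrow> real list" where
  "singular_values A =
     rev (sorted_list_of_multiset (image_mset sqrt (proots (char_poly (transpose_mat A * A)))))"

text \<open>sigma i A = i-th largest singular value (1-based).\<close>
definition sigma :: "nat \<Rightarrow> real mat \<Rightarrow> real" where
  "sigma i A = singular_values A ! (i - 1)"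

definition frob_norm :: "real mat \<Rightarrow> real" where
  "frob_norm A = sqrt (\<Sum>i<dim_row A. \<Sum>j<dim_col A. (A $$ (i, j))^2)"

fun wprod :: "(nat \<Rightarrow> real mat) \<Rightarrow> nat \<Rightarrow> nat \<Rightarrow> real mat" where
  "wprod W 0 d = 1\<^sub>m d"
| "wprod W (Suc l) d = W (Suc l) * wprod W l d"

text \<open>Label matrix Y = I_K \<otimes> 1_n^T (K x nK), samples ordered by class.\<close>
definition label_mat :: "nat \<Rightarrow> nat \<Rightarrow> real mat" where
  "label_mat K n = mat K (n * K) (\<lambda>(i, j). if j div n = i then 1 else 0)"

definition orthogonal_mat :: "nat \<Rightarrow> real mat \<Rightarrow> bool" where
  "orthogonal_mat d X \<longleftrightarrow> X \<in> carrier_mat d d \<and> transpose_mat X * X = 1\<^sub>m d"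

end

theory Submission
  imports Defs "HOL-Computational_Algebra.Fundamental_Theorem_Algebra"
begin


lemma mult_mat_vec_sum:
  assumes "A \<in> carrier_mat n m" "v \<in> carrier_vec m" "i < n"
  shows "(A *\<^sub>v v) $ i = (\<Sum>j<m. A $$ (i,j) * v $ j)"
  using assms by (simp add: scalar_prod_def atLeast0LessThan)

lemma real_sym_eigenvector:
  fixes A :: "real mat"
  assumes A: "A \<in> carrier_mat n n" and sym: "transpose_mat A = A" and n: "n > 0"
  shows "\<exists>r v. v \<in> carrier_vec n \<and> v \<noteq> 0\<^sub>v n \<and> A *\<^sub>v v = r \<cdot>\<^sub>v v"
proof -
  let ?Ac = "map_mat complex_of_real A"
  have Ac: "?Ac \<in> carrier_mat n n" using A by simp
  have "degree (char_poly ?Ac) = n" using degree_monic_char_poly[OF Ac] by simp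
  hence "\<not> constant (poly (char_poly ?Ac))" using n by (simp add: constant_degree)
  then obtain lam where "poly (char_poly ?Ac) lam = 0" using fundamental_theorem_of_algebra by blast
  hence "eigenvalue ?Ac lam" using eigenvalue_root_char_poly[OF Ac] by simp
  then obtain v where v: "v \<in> carrier_vec n" "v \<noteq> 0\<^sub>v n" "?Ac *\<^sub>v v = lam \<cdot>\<^sub>v v"
    unfolding eigenvalue_def eigenvector_def using Ac by auto
  have eq: "(\<Sum>j<n. complex_of_real (A $$ (i,j)) * v $ j) = lam * v $ i" if i: "i < n" for i
  proof -
    have "(?Ac *\<^sub>v v) $ i = (lam \<cdot>\<^sub>v v) $ i" using v(3) by simp
    then show ?thesis using mult_mat_vec_sum[OF Ac v(1) i] i v(1) A by simp
  qed
  have Asym: "A $$ (i,j) = A $$ (j,i)" if "i < n" "j < n" for i j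
    using sym that A by (metis carrier_matD(1) carrier_matD(2) index_transpose_mat(1))
  define S where "S = (\<Sum>i<n. cnj (v$i) * (\<Sum>j<n. complex_of_real (A$$(i,j)) * v$j))"
  define N where "N = (\<Sum>i<n. cnj (v$i) * v$i)"
  have S1: "S = lam * N" unfolding S_def N_def using eq
    by (simp add: sum_distrib_left mult_ac)
  have "cnj S = (\<Sum>i<n. \<Sum>j<n. v$i * complex_of_real (A$$(i,j)) * cnj (v$j))"
    unfolding S_def by (simp add: sum_distrib_left mult_ac)
  also have "\<dots> = (\<Sum>j<n. \<Sum>i<n. v$i * complex_of_real (A$$(i,j)) * cnj (v$j))"
    by (rule sum.swap)
  also have "\<dots> = S" unfolding S_def
    by (auto simp: sum_distrib_left mult_ac Asym intro!: sum.cong)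
  finally have S2: "cnj S = S" .
  have Nreal: "N = complex_of_real (\<Sum>i<n. (cmod (v$i))^2)"
    unfolding N_def of_real_sum by (intro sum.cong refl, metis complex_norm_square of_real_power mult.commute)
  obtain k where k: "k < n" "v $ k \<noteq> 0" using v(1,2) by (metis carrier_vecD eq_vecI index_zero_vec(1) index_zero_vec(2))
  have "(\<Sum>i<n. (cmod (v$i))^2) > 0"
  proof -
    have "(cmod (v$k))^2 > 0" using k by simp
    also have "(cmod (v$k))^2 \<le> (\<Sum>i<n. (cmod (v$i))^2)"
      using k by (intro member_le_sum) auto
    finally show ?thesis .
  qed
  hence N0: "N \<noteq> 0" using Nreal by (metis of_real_eq_0_iff order_less_irrefl)
  have "cnj lam * N = lam * N" using S1 S2 Nreal by (metis complex_cnj_complex_of_real complex_cnj_mult)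
  hence lamr: "cnj lam = lam" using N0 by simp
  define r where "r = Re lam"
  have lam: "lam = complex_of_real r" using lamr unfolding r_def
    by (metis Reals_cnj_iff complex_is_Real_iff of_real_Re)
  have eqr: "(\<Sum>j<n. A $$ (i,j) * Re (v $ j)) = r * Re (v $ i)"
    "(\<Sum>j<n. A $$ (i,j) * Im (v $ j)) = r * Im (v $ i)" if i: "i < n" for i
  proof -
    from arg_cong[OF eq[OF i], of Re] show "(\<Sum>j<n. A $$ (i,j) * Re (v $ j)) = r * Re (v $ i)"
      by (simp add: Re_sum lam)
    from arg_cong[OF eq[OF i], of Im] show "(\<Sum>j<n. A $$ (i,j) * Im (v $ j)) = r * Im (v $ i)"
      by (simp add: Im_sum lam)
  qed
  show ?thesis
  proof (cases "Re (v $ k) \<noteq> 0")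
    case True
    define a where "a = vec n (\<lambda>j. Re (v $ j))"
    have "a \<in> carrier_vec n" unfolding a_def by simp
    moreover have "a \<noteq> 0\<^sub>v n" using True k unfolding a_def
      by (metis index_vec index_zero_vec(1))
    moreover have "A *\<^sub>v a = r \<cdot>\<^sub>v a"
      by (rule eq_vecI, insert A eqr(1), auto simp: a_def scalar_prod_def atLeast0LessThan)
    ultimately show ?thesis by blast
  next
    case False
    hence True': "Im (v $ k) \<noteq> 0" using k(2) complex_eqI by force
    define a where "a = vec n (\<lambda>j. Im (v $ j))"
    have "a \<in> carrier_vec n" unfolding a_def by simp
    moreover have "a \<noteq> 0\<^sub>v n" using True' k unfolding a_def
      by (metis index_vec index_zero_vec(1))
    moreover have "A *\<^sub>v a = r \<cdot>\<^sub>v a"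
      by (rule eq_vecI, insert A eqr(2), auto simp: a_def scalar_prod_def atLeast0LessThan)
    ultimately show ?thesis by blast
  qed
qed



lemma sum_delta_left: "(i::nat) < n \<Longrightarrow> (\<Sum>k<n. (if i = k then 1 else 0) * (f k :: real)) = f i"
proof -
  assume i: "i < n"
  have "(\<Sum>k<n. (if i = k then 1 else 0) * (f k :: real)) = (\<Sum>k<n. if i = k then f k else 0)"
    by (rule sum.cong) auto
  thus ?thesis using i by (simp add: sum.delta sum.delta')
qed
lemma sum_delta_right: "(j::nat) < n \<Longrightarrow> (\<Sum>k<n. (f k :: real) * (if k = j then 1 else 0)) = f j"
proof -
  assume i: "j < n"
  have "(\<Sum>k<n. (f k :: real) * (if k = j then 1 else 0)) = (\<Sum>k<n. if k = j then f k else 0)"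
    by (rule sum.cong) auto
  thus ?thesis using i by (simp add: sum.delta sum.delta')
qed

lemma householder:
  fixes v :: "real vec"
  assumes v: "v \<in> carrier_vec n" and v1: "v \<bullet> v = 1" and n: "n > 0"
  shows "\<exists>H \<in> carrier_mat n n. transpose_mat H = H \<and> H * H = 1\<^sub>m n \<and> H *\<^sub>v unit_vec n 0 = v"
proof (cases "v $ 0 = 1")
  case True
  have vv: "(\<Sum>i<n. v$i * v$i) = 1" using v1 v by (simp add: scalar_prod_def atLeast0LessThan)
  have split: "(\<Sum>i<n. v$i * v$i) = v$0 * v$0 + (\<Sum>i\<in>{..<n}-{0}. v$i * v$i)"
    using n by (subst sum.remove[of _ 0]) auto
  have "(\<Sum>i\<in>{..<n}-{0}. v$i * v$i) = 0" using vv split True by simp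
  hence z: "\<forall>i\<in>{..<n}-{0}. v$i * v$i = 0"
    by (subst (asm) sum_nonneg_eq_0_iff) auto
  have "v = unit_vec n 0"
    by (rule eq_vecI, insert v z True n, auto simp: unit_vec_def)
  thus ?thesis by (intro bexI[of _ "1\<^sub>m n"]) (auto simp: v)
next
  case False
  define u where "u i = v$i - (if i = 0 then 1 else 0)" for i
  define c where "c = 1 / (1 - v$0)"
  have vv: "(\<Sum>i<n. v$i * v$i) = 1" using v1 v by (simp add: scalar_prod_def atLeast0LessThan)
  have s: "(\<Sum>k<n. u k * u k) = 2 * (1 - v$0)"
  proof -
    have "(\<Sum>k<n. u k * u k) = (\<Sum>k<n. v$k * v$k) - 2 * (\<Sum>k<n. v$k * (if k = 0 then 1 else 0))
        + (\<Sum>k<n. (if k = 0 then 1 else 0) * (if k = 0 then 1 else (0::real)))"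
      unfolding u_def by (simp add: algebra_simps sum.distrib sum_subtractf sum_distrib_left)
    also have "\<dots> = 1 - 2 * v$0 + 1" using n vv by (simp add: if_distrib cong: if_cong)
    finally show ?thesis by simp
  qed
  have cs: "c * (\<Sum>k<n. u k * u k) = 2" using s False unfolding c_def by (simp add: field_simps)
  define H where "H = mat n n (\<lambda>(i,j). (if i = j then 1 else 0) - c * u i * u j)"
  have H: "H \<in> carrier_mat n n" unfolding H_def by simp
  have HT: "transpose_mat H = H" unfolding H_def by (rule eq_matI) auto
  have HH: "H * H = 1\<^sub>m n"
  proof (rule eq_matI)
    fix i j assume i: "i < dim_row (1\<^sub>m n)" and j: "j < dim_col (1\<^sub>m n)"
    hence i: "i < n" and j: "j < n" by auto
    have "(H * H) $$ (i,j) = (\<Sum>k<n. ((if i = k then 1 else 0) - c * u i * u k) * ((if k = j then 1 else 0) - c * u k * u j))"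
      using i j by (simp add: H_def scalar_prod_def atLeast0LessThan)
    also have "\<dots> = (\<Sum>k<n. (if i = k then 1 else 0) * (if k = j then 1 else 0))
        - (\<Sum>k<n. (if i = k then 1 else 0) * (c * u k * u j))
        - (\<Sum>k<n. (c * u i * u k) * (if k = j then 1 else 0))
        + c * c * u i * u j * (\<Sum>k<n. u k * u k)"
      by (simp add: algebra_simps sum.distrib sum_subtractf sum_distrib_left)
    also have "\<dots> = (if i = j then 1 else 0) - c * u i * u j - c * u i * u j + c * u i * u j * (c * (\<Sum>k<n. u k * u k))"
      using i j by (simp only: sum_delta_left sum_delta_right) (simp add: if_distrib cong: if_cong)
    also have "\<dots> = (if i = j then 1 else 0)" using cs by simp
    finally show "(H * H) $$ (i,j) = 1\<^sub>m n $$ (i,j)" using i j by simp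
  qed (auto simp: H_def)
  have Hv: "H *\<^sub>v unit_vec n 0 = v"
  proof (rule eq_vecI)
    fix i assume "i < dim_vec v"
    hence i: "i < n" using v by simp
    have "(H *\<^sub>v unit_vec n 0) $ i = H $$ (i,0)"
      using i n by (simp add: H_def scalar_prod_def atLeast0LessThan unit_vec_def if_distrib cong: if_cong)
    also have "\<dots> = (if i = 0 then 1 else 0) - c * u i * u 0" using i n by (simp add: H_def)
    also have "\<dots> = v $ i" using False unfolding c_def u_def by (simp add: field_simps)
    finally show "(H *\<^sub>v unit_vec n 0) $ i = v $ i" .
  qed (use v H in auto)
  show ?thesis using H HT HH Hv by blast
qed



lemma mat_vec_unit: "A \<in> carrier_mat n m \<Longrightarrow> i < n \<Longrightarrow> j < m \<Longrightarrow> (A *\<^sub>v unit_vec m j) $ i = (A $$ (i,j) :: real)"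
  by (simp add: scalar_prod_def atLeast0LessThan unit_vec_def if_distrib cong: if_cong)

lemma sprod_self_sum: "w \<in> carrier_vec n \<Longrightarrow> w \<bullet> w = (\<Sum>i<n. (w $ i)^2 :: real)"
  by (simp add: scalar_prod_def atLeast0LessThan power2_eq_square)

lemma sprod_self_nonneg: "w \<in> carrier_vec n \<Longrightarrow> w \<bullet> w \<ge> (0::real)"
  by (simp add: sprod_self_sum sum_nonneg)

lemma sprod_self_pos: assumes w: "w \<in> carrier_vec n" "w \<noteq> 0\<^sub>v n" shows "w \<bullet> w > (0::real)"
proof -
  obtain k where k: "k < n" "w $ k \<noteq> 0" using w
    by (metis carrier_vecD eq_vecI index_zero_vec(1) index_zero_vec(2))
  have "(w $ k)^2 > 0" using k by simp
  also have "(w $ k)^2 \<le> (\<Sum>i<n. (w $ i)^2)" using k by (intro member_le_sum) auto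
  finally show ?thesis using sprod_self_sum[OF w(1)] by simp
qed

lemma spectral_aux:
  "\<forall>A :: real mat. A \<in> carrier_mat n n \<longrightarrow> transpose_mat A = A \<longrightarrow>
    (\<exists>Q D. Q \<in> carrier_mat n n \<and> D \<in> carrier_mat n n \<and> diagonal_mat D \<and>
       transpose_mat Q * Q = 1\<^sub>m n \<and> A = Q * D * transpose_mat Q)"
proof (induction n)
  case 0
  show ?case
  proof (intro allI impI)
    fix A :: "real mat" assume A: "A \<in> carrier_mat 0 0"
    show "\<exists>Q D. Q \<in> carrier_mat 0 0 \<and> D \<in> carrier_mat 0 0 \<and> diagonal_mat D \<and>
       transpose_mat Q * Q = 1\<^sub>m 0 \<and> A = Q * D * transpose_mat Q"
      by (rule exI[of _ "1\<^sub>m 0"], rule exI[of _ A], insert A, auto simp: diagonal_mat_def)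
  qed
next
  case (Suc m)
  show ?case
  proof (intro allI impI)
    fix A :: "real mat" assume A: "A \<in> carrier_mat (Suc m) (Suc m)" and sym: "transpose_mat A = A"
    obtain r w where w: "w \<in> carrier_vec (Suc m)" "w \<noteq> 0\<^sub>v (Suc m)" "A *\<^sub>v w = r \<cdot>\<^sub>v w"
      using real_sym_eigenvector[OF A sym] by auto
    have ww: "w \<bullet> w > 0" using sprod_self_pos[OF w(1,2)] .
    define v where "v = (1 / sqrt (w \<bullet> w)) \<cdot>\<^sub>v w"
    have v: "v \<in> carrier_vec (Suc m)" using w unfolding v_def by simp
    have v1: "v \<bullet> v = 1" using ww w unfolding v_def
      by (simp add: smult_scalar_prod_distrib scalar_prod_smult_distrib[OF w(1)] field_simps)
    have Av: "A *\<^sub>v v = r \<cdot>\<^sub>v v" unfolding v_def using w A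
      by (simp add: mult_mat_vec smult_smult_assoc mult.commute)
    obtain H where H: "H \<in> carrier_mat (Suc m) (Suc m)" "transpose_mat H = H" "H * H = 1\<^sub>m (Suc m)"
       "H *\<^sub>v unit_vec (Suc m) 0 = v" using householder[OF v v1] by auto
    define A' where "A' = H * A * H"
    have A': "A' \<in> carrier_mat (Suc m) (Suc m)" unfolding A'_def using H A by simp
    have A'sym: "transpose_mat A' = A'" unfolding A'_def using H A sym
      by (simp add: transpose_mult[of _ "Suc m" "Suc m" _ "Suc m"] assoc_mult_mat[of _ "Suc m" "Suc m" _ "Suc m" _ "Suc m"])
    have Hv: "H *\<^sub>v v = unit_vec (Suc m) 0"
      using H by (metis H(4) assoc_mult_mat_vec one_mult_mat_vec unit_vec_carrier)
    have A'e: "A' *\<^sub>v unit_vec (Suc m) 0 = r \<cdot>\<^sub>v unit_vec (Suc m) 0"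
    proof -
      have "A' *\<^sub>v unit_vec (Suc m) 0 = H *\<^sub>v (A *\<^sub>v (H *\<^sub>v unit_vec (Suc m) 0))"
        unfolding A'_def using H A by (simp add: assoc_mult_mat_vec[of _ "Suc m" "Suc m" _ "Suc m"])
      also have "\<dots> = r \<cdot>\<^sub>v unit_vec (Suc m) 0" using H(1,4) Av Hv v
        by (simp add: mult_mat_vec)
      finally show ?thesis .
    qed
    have col0: "A' $$ (i, 0) = (if i = 0 then r else 0)" if "i < Suc m" for i
      using arg_cong[OF A'e, of "\<lambda>x. x $ i"] mat_vec_unit[OF A' that, of 0] that by simp
    have row0: "A' $$ (0, j) = (if j = 0 then r else 0)" if "j < Suc m" for j
      using col0[OF that] A'sym A' that by (metis carrier_matD index_transpose_mat(1) zero_less_Suc)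
    define A3 where "A3 = mat m m (\<lambda>(i,j). A' $$ (Suc i, Suc j))"
    define D1 where "D1 = mat 1 1 (\<lambda>_. r)"
    have A3: "A3 \<in> carrier_mat m m" unfolding A3_def by simp
    have D1: "D1 \<in> carrier_mat 1 1" unfolding D1_def by simp
    have A3sym: "transpose_mat A3 = A3" unfolding A3_def
      by (rule eq_matI, insert A'sym A', auto) (metis Suc_mono carrier_matD index_transpose_mat(1))
    have A'blk: "A' = four_block_mat D1 (0\<^sub>m 1 m) (0\<^sub>m m 1) A3"
      by (rule eq_matI, insert A' col0 row0, auto simp: A3_def D1_def)
    obtain Q3 D3 where Q3: "Q3 \<in> carrier_mat m m" "D3 \<in> carrier_mat m m" "diagonal_mat D3"
       "transpose_mat Q3 * Q3 = 1\<^sub>m m" "A3 = Q3 * D3 * transpose_mat Q3"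
      using Suc.IH A3 A3sym by blast
    define B where "B = four_block_mat (1\<^sub>m 1) (0\<^sub>m 1 m) (0\<^sub>m m 1) Q3"
    define D where "D = four_block_mat D1 (0\<^sub>m 1 m) (0\<^sub>m m 1) D3"
    have B: "B \<in> carrier_mat (Suc m) (Suc m)" unfolding B_def using Q3 by auto
    have D: "D \<in> carrier_mat (Suc m) (Suc m)" unfolding D_def using Q3 D1 by auto
    have BT: "transpose_mat B = four_block_mat (1\<^sub>m 1) (0\<^sub>m 1 m) (0\<^sub>m m 1) (transpose_mat Q3)"
      unfolding B_def using Q3 by (subst transpose_four_block_mat) auto
    have BTB: "transpose_mat B * B = 1\<^sub>m (Suc m)"
      unfolding BT unfolding B_def using Q3
      by (subst mult_four_block_mat[of _ 1 1 _ m _ m _ _ 1 _ m]) auto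
    have BDB: "B * D * transpose_mat B = A'"
      unfolding BT unfolding B_def D_def A'blk using Q3 D1
      by (simp add: mult_four_block_mat[of _ 1 1 _ m _ m _ _ 1 _ m])
    define Q where "Q = H * B"
    have Q: "Q \<in> carrier_mat (Suc m) (Suc m)" unfolding Q_def using H B by simp
    have QTQ: "transpose_mat Q * Q = 1\<^sub>m (Suc m)"
    proof -
      have HHB: "H * (H * B) = B" using H B
        by (metis assoc_mult_mat left_mult_one_mat)
      have "transpose_mat Q * Q = transpose_mat B * (H * (H * B))"
        unfolding Q_def using H B
        by (simp add: transpose_mult[of _ "Suc m" "Suc m" _ "Suc m"] assoc_mult_mat[of _ "Suc m" "Suc m" _ "Suc m" _ "Suc m"])
      also have "\<dots> = 1\<^sub>m (Suc m)" using HHB BTB by simp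
      finally show ?thesis .
    qed
    have QDQ: "A = Q * D * transpose_mat Q"
    proof -
      have "Q * D * transpose_mat Q = H * (B * D * transpose_mat B) * H"
        unfolding Q_def using H B D
        by (simp add: transpose_mult[of _ "Suc m" "Suc m" _ "Suc m"] assoc_mult_mat[of _ "Suc m" "Suc m" _ "Suc m" _ "Suc m"])
      also have "\<dots> = A" unfolding BDB A'_def
      proof -
        have HH': "H * (H * X) = X" if "X \<in> carrier_mat (Suc m) (Suc m)" for X
          using H that by (metis assoc_mult_mat left_mult_one_mat)
        show "H * (H * A * H) * H = A" using H A
          by (simp add: assoc_mult_mat[of _ "Suc m" "Suc m" _ "Suc m" _ "Suc m"] HH')
      qed
      finally show ?thesis by simp
    qed
    have Ddiag: "diagonal_mat D" using Q3(3) D1 Q3(2) unfolding D_def diagonal_mat_def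
      by (auto simp: D1_def)
    show "\<exists>Q D. Q \<in> carrier_mat (Suc m) (Suc m) \<and> D \<in> carrier_mat (Suc m) (Suc m) \<and> diagonal_mat D \<and>
       transpose_mat Q * Q = 1\<^sub>m (Suc m) \<and> A = Q * D * transpose_mat Q"
      using Q D Ddiag QTQ QDQ by blast
  qed
qed



lemma spectral:
  fixes M :: "real mat"
  assumes "M \<in> carrier_mat n n" "transpose_mat M = M"
  shows "\<exists>Q D. Q \<in> carrier_mat n n \<and> D \<in> carrier_mat n n \<and> diagonal_mat D \<and>
       transpose_mat Q * Q = 1\<^sub>m n \<and> Q * transpose_mat Q = 1\<^sub>m n \<and> M = Q * D * transpose_mat Q"
proof -
  obtain Q D where QD: "Q \<in> carrier_mat n n" "D \<in> carrier_mat n n" "diagonal_mat D"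
       "transpose_mat Q * Q = 1\<^sub>m n" "M = Q * D * transpose_mat Q"
    using spectral_aux[of n] assms by blast
  have "Q * transpose_mat Q = 1\<^sub>m n"
    using mat_mult_left_right_inverse[of "transpose_mat Q" n Q] QD by simp
  thus ?thesis using QD by blast
qed

lemma proots_linear_prod: "proots (\<Prod>a\<leftarrow>es. [:- a, 1:]) = mset (es :: real list)"
proof (induction es)
  case Nil then show ?case by simp
next
  case (Cons a es)
  have nz: "(\<Prod>a\<leftarrow>es. [:- a, 1:]) \<noteq> (0 :: real poly)"
    by (auto simp: prod_list_zero_iff)
  have "proots (\<Prod>a\<leftarrow>a#es. [:- a, 1:]) = proots ([:-a,1:] * (\<Prod>a\<leftarrow>es. [:- a, 1:]))" by simp
  also have "\<dots> = proots [:-a,1:] + proots (\<Prod>a\<leftarrow>es. [:- a, 1:])" by (rule proots_mult) (use nz in auto)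
  also have "\<dots> = mset (a#es)" using Cons by (simp only: proots_linear_factor) simp
  finally show ?case .
qed

lemma diag_upper: "D \<in> carrier_mat n n \<Longrightarrow> diagonal_mat D \<Longrightarrow> upper_triangular D"
  unfolding diagonal_mat_def upper_triangular_def by auto

lemma sv_decomp:
  fixes A :: "real mat"
  assumes A: "A \<in> carrier_mat r d"
  shows "\<exists>Q D. Q \<in> carrier_mat d d \<and> D \<in> carrier_mat d d \<and> diagonal_mat D \<and>
       transpose_mat Q * Q = 1\<^sub>m d \<and> Q * transpose_mat Q = 1\<^sub>m d \<and>
       transpose_mat A * A = Q * D * transpose_mat Q \<and>
       singular_values A = rev (sort (map sqrt (diag_mat D)))"
proof -
  have M: "transpose_mat A * A \<in> carrier_mat d d" using A by simp
  have Ms: "transpose_mat (transpose_mat A * A) = transpose_mat A * A"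
    using A by (simp add: transpose_mult[of _ d r])
  obtain Q D where QD: "Q \<in> carrier_mat d d" "D \<in> carrier_mat d d" "diagonal_mat D"
       "transpose_mat Q * Q = 1\<^sub>m d" "Q * transpose_mat Q = 1\<^sub>m d" "transpose_mat A * A = Q * D * transpose_mat Q"
    using spectral[OF M Ms] by blast
  have "similar_mat (transpose_mat A * A) D"
    by (rule similar_matI[of _ _ Q "transpose_mat Q" d], insert QD M, auto)
  hence "char_poly (transpose_mat A * A) = char_poly D" by (rule char_poly_similar)
  also have "\<dots> = (\<Prod>a\<leftarrow>diag_mat D. [:- a, 1:])"
    by (rule char_poly_upper_triangular[OF QD(2) diag_upper[OF QD(2,3)]])
  finally have "proots (char_poly (transpose_mat A * A)) = mset (diag_mat D)"
    by (simp add: proots_linear_prod)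
  hence "singular_values A = rev (sort (map sqrt (diag_mat D)))"
    unfolding singular_values_def by (simp flip: mset_map)
  thus ?thesis using QD by blast
qed

lemma diag_mult_vec:
  fixes D :: "real mat"
  assumes D: "D \<in> carrier_mat n n" "diagonal_mat D" and z: "z \<in> carrier_vec n" and i: "i < n"
  shows "(D *\<^sub>v z) $ i = D $$ (i,i) * z $ i"
proof -
  have "(D *\<^sub>v z) $ i = (\<Sum>j<n. D $$ (i,j) * z $ j)" by (rule mult_mat_vec_sum[OF D(1) z i])
  also have "\<dots> = (\<Sum>j<n. if j = i then D $$ (i,i) * z $ i else 0)"
    by (rule sum.cong, insert D i, auto simp: diagonal_mat_def)
  also have "\<dots> = D $$ (i,i) * z $ i" using i by simp
  finally show ?thesis .
qed

lemma quad_form: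
  fixes A :: "real mat"
  assumes A: "A \<in> carrier_mat r d" and Q: "Q \<in> carrier_mat d d" and D: "D \<in> carrier_mat d d" "diagonal_mat D"
    and QQ: "Q * transpose_mat Q = 1\<^sub>m d" and M: "transpose_mat A * A = Q * D * transpose_mat Q"
    and y: "y \<in> carrier_vec d"
  shows "(A *\<^sub>v y) \<bullet> (A *\<^sub>v y) = (\<Sum>i<d. D $$ (i,i) * ((transpose_mat Q *\<^sub>v y) $ i)^2)"
    and "y \<bullet> y = (\<Sum>i<d. ((transpose_mat Q *\<^sub>v y) $ i)^2)"
proof -
  define z where "z = transpose_mat Q *\<^sub>v y"
  have z: "z \<in> carrier_vec d" unfolding z_def using Q y by simp
  have "(A *\<^sub>v y) \<bullet> (A *\<^sub>v y) = (transpose_mat A *\<^sub>v (A *\<^sub>v y)) \<bullet> y"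
    using transpose_vec_mult_scalar[of A r d y "A *\<^sub>v y"] A y by simp
  also have "\<dots> = ((transpose_mat A * A) *\<^sub>v y) \<bullet> y"
    using A y by (simp add: assoc_mult_mat_vec[of _ d r _ d])
  also have "\<dots> = (Q *\<^sub>v (D *\<^sub>v z)) \<bullet> y" unfolding M z_def using Q D y
    by (simp add: assoc_mult_mat_vec[of _ d d _ d])
  also have "\<dots> = (D *\<^sub>v z) \<bullet> z"
    using transpose_vec_mult_scalar[of "transpose_mat Q" d d y "D *\<^sub>v z"] Q D z y
    by (simp add: z_def comm_scalar_prod[of _ d])
  also have "\<dots> = (\<Sum>i<d. (D *\<^sub>v z) $ i * z $ i)"
    using z unfolding scalar_prod_def by (simp add: atLeast0LessThan)
  also have "\<dots> = (\<Sum>i<d. D $$ (i,i) * (z $ i)^2)"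
    by (rule sum.cong) (simp_all add: diag_mult_vec[OF D z] power2_eq_square)
  finally show "(A *\<^sub>v y) \<bullet> (A *\<^sub>v y) = (\<Sum>i<d. D $$ (i,i) * ((transpose_mat Q *\<^sub>v y) $ i)^2)"
    unfolding z_def .
  have "y \<bullet> y = (Q *\<^sub>v z) \<bullet> y" unfolding z_def using Q y QQ
    by (simp add: assoc_mult_mat_vec[of _ d d _ d, symmetric])
  also have "\<dots> = z \<bullet> z"
    using transpose_vec_mult_scalar[of "transpose_mat Q" d d y z] Q z y
    by (simp add: z_def comm_scalar_prod[of _ d])
  also have "\<dots> = (\<Sum>i<d. (z $ i)^2)" using z by (rule sprod_self_sum)
  finally show "y \<bullet> y = (\<Sum>i<d. ((transpose_mat Q *\<^sub>v y) $ i)^2)" unfolding z_def .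
qed



lemma QTQ_unit:
  fixes Q :: "real mat"
  assumes Q: "Q \<in> carrier_mat d d" and QQ: "transpose_mat Q * Q = 1\<^sub>m d"
  shows "transpose_mat Q *\<^sub>v (Q *\<^sub>v unit_vec d j) = unit_vec d j"
  using Q QQ by (metis assoc_mult_mat_vec carrier_matD(2) index_transpose_mat(3) one_mult_mat_vec transpose_carrier_mat unit_vec_carrier)

lemma sum_unit_sq: "j < d \<Longrightarrow> (\<Sum>i<d. f i * ((unit_vec d j $ i)^2)) = (f j :: real)"
proof -
  assume j: "j < d"
  have "(\<Sum>i<d. f i * ((unit_vec d j $ i)^2)) = (\<Sum>i<d. if i = j then f i else 0)"
    by (rule sum.cong) (auto simp: unit_vec_def)
  also have "\<dots> = f j" using j by simp
  finally show ?thesis .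
qed

lemma sigma_upper:
  fixes A :: "real mat"
  assumes A: "A \<in> carrier_mat r d"
    and bound: "\<forall>x \<in> carrier_vec d. (A *\<^sub>v x) \<bullet> (A *\<^sub>v x) \<le> c * (x \<bullet> x)"
    and i: "0 < i" "i \<le> d"
  shows "sigma i A \<le> sqrt c"
proof -
  obtain Q D where QD: "Q \<in> carrier_mat d d" "D \<in> carrier_mat d d" "diagonal_mat D"
       "transpose_mat Q * Q = 1\<^sub>m d" "Q * transpose_mat Q = 1\<^sub>m d"
       "transpose_mat A * A = Q * D * transpose_mat Q"
       "singular_values A = rev (sort (map sqrt (diag_mat D)))"
    using sv_decomp[OF A] by blast
  have le: "D $$ (j,j) \<le> c" if j: "j < d" for j
  proof -
    define y where "y = Q *\<^sub>v unit_vec d j"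
    have y: "y \<in> carrier_vec d" unfolding y_def using QD by simp
    have e: "transpose_mat Q *\<^sub>v y = unit_vec d j" unfolding y_def by (rule QTQ_unit[OF QD(1,4)])
    have "(A *\<^sub>v y) \<bullet> (A *\<^sub>v y) = D $$ (j,j)"
      using quad_form(1)[OF A QD(1,2,3,5,6) y] unfolding e using sum_unit_sq[OF j] by simp
    moreover have "y \<bullet> y = 1"
      using quad_form(2)[OF A QD(1,2,3,5,6) y] unfolding e using sum_unit_sq[OF j, of "\<lambda>_. 1"] by simp
    ultimately show ?thesis using bound y by force
  qed
  have len: "length (singular_values A) = d" using QD(2,7) by (simp add: diag_mat_def)
  have "sigma i A \<in> set (singular_values A)" unfolding sigma_def using len i by simp
  hence "sigma i A \<in> sqrt ` set (diag_mat D)" using QD(7) by simp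
  then obtain j where j: "j < d" "sigma i A = sqrt (D $$ (j,j))" using QD(2)
    by (auto simp: diag_mat_def)
  thus ?thesis using le[OF j(1)] by simp
qed

lemma sigma_mono:
  fixes A :: "real mat"
  assumes A: "A \<in> carrier_mat r d" and ij: "0 < i" "i \<le> j" "j \<le> d"
  shows "sigma j A \<le> sigma i A"
proof -
  obtain Q D where QD: "D \<in> carrier_mat d d"
       "singular_values A = rev (sort (map sqrt (diag_mat D)))"
    using sv_decomp[OF A] by blast
  define xs where "xs = sort (map sqrt (diag_mat D))"
  have len: "length xs = d" unfolding xs_def using QD by (simp add: diag_mat_def)
  have "sigma j A = xs ! (d - j)" "sigma i A = xs ! (d - i)"
    unfolding sigma_def QD(2) xs_def[symmetric] using ij len by (simp_all add: rev_nth)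
  moreover have "xs ! (d - j) \<le> xs ! (d - i)"
    by (rule sorted_nth_mono) (use ij len in \<open>auto simp: xs_def\<close>)
  ultimately show ?thesis by simp
qed

lemma top_eig:
  fixes A :: "real mat"
  assumes A: "A \<in> carrier_mat r d" and d: "0 < d"
  shows "\<exists>x \<mu>. x \<in> carrier_vec d \<and> x \<bullet> x = 1 \<and> (transpose_mat A * A) *\<^sub>v x = \<mu> \<cdot>\<^sub>v x \<and>
     (\<forall>y\<in>carrier_vec d. (A *\<^sub>v y) \<bullet> (A *\<^sub>v y) \<le> \<mu> * (y \<bullet> y))"
proof -
  obtain Q D where QD: "Q \<in> carrier_mat d d" "D \<in> carrier_mat d d" "diagonal_mat D"
       "transpose_mat Q * Q = 1\<^sub>m d" "Q * transpose_mat Q = 1\<^sub>m d"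
       "transpose_mat A * A = Q * D * transpose_mat Q"
    using sv_decomp[OF A] by blast
  define S where "S = (\<lambda>i. D $$ (i,i)) ` {..<d}"
  have fS: "finite S" "S \<noteq> {}" unfolding S_def using d by auto
  define \<mu> where "\<mu> = Max S"
  obtain i0 where i0: "i0 < d" "D $$ (i0,i0) = \<mu>" using Max_in[OF fS] unfolding \<mu>_def S_def by auto
  have mu: "D $$ (i,i) \<le> \<mu>" if "i < d" for i using Max_ge[OF fS(1)] that unfolding \<mu>_def S_def by auto
  define x where "x = Q *\<^sub>v unit_vec d i0"
  have x: "x \<in> carrier_vec d" unfolding x_def using QD by simp
  have e: "transpose_mat Q *\<^sub>v x = unit_vec d i0" unfolding x_def by (rule QTQ_unit[OF QD(1,4)])
  have xx: "x \<bullet> x = 1"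
    using quad_form(2)[OF A QD(1,2,3,5,6) x] unfolding e using sum_unit_sq[OF i0(1), of "\<lambda>_. 1"] by simp
  have De: "D *\<^sub>v unit_vec d i0 = \<mu> \<cdot>\<^sub>v unit_vec d i0"
    by (rule eq_vecI, insert QD(2) i0 diag_mult_vec[OF QD(2,3) unit_vec_carrier[of d i0]],
        auto simp: unit_vec_def simp del: index_mult_mat_vec)
  have "(transpose_mat A * A) *\<^sub>v x = Q *\<^sub>v (D *\<^sub>v (transpose_mat Q *\<^sub>v x))"
    unfolding QD(6) using QD x by (simp add: assoc_mult_mat_vec[of _ d d _ d])
  also have "\<dots> = \<mu> \<cdot>\<^sub>v x" unfolding e De using QD by (simp add: mult_mat_vec x_def)
  finally have ev: "(transpose_mat A * A) *\<^sub>v x = \<mu> \<cdot>\<^sub>v x" .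
  have bd: "(A *\<^sub>v y) \<bullet> (A *\<^sub>v y) \<le> \<mu> * (y \<bullet> y)" if y: "y \<in> carrier_vec d" for y
  proof -
    have "(A *\<^sub>v y) \<bullet> (A *\<^sub>v y) = (\<Sum>i<d. D $$ (i,i) * ((transpose_mat Q *\<^sub>v y) $ i)^2)"
      by (rule quad_form(1)[OF A QD(1,2,3,5,6) y])
    also have "\<dots> \<le> (\<Sum>i<d. \<mu> * ((transpose_mat Q *\<^sub>v y) $ i)^2)"
      by (rule sum_mono, rule mult_right_mono, auto simp: mu)
    also have "\<dots> = \<mu> * (y \<bullet> y)"
      unfolding quad_form(2)[OF A QD(1,2,3,5,6) y] by (simp add: sum_distrib_left)
    finally show ?thesis .
  qed
  show ?thesis using x xx ev bd by blast
qed



lemma wide_kernel: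
  fixes C :: "real mat"
  assumes C: "C \<in> carrier_mat k k" and k: "0 < k" and zr: "\<forall>l<k. C $$ (k - 1, l) = 0"
  shows "\<exists>z. z \<in> carrier_vec k \<and> z \<noteq> 0\<^sub>v k \<and> C *\<^sub>v z = 0\<^sub>v k"
proof -
  have CT: "transpose_mat C \<in> carrier_mat k k" using C by simp
  have "transpose_mat C *\<^sub>v unit_vec k (k - 1) = 0\<^sub>v k"
    by (rule eq_vecI, insert C k zr mat_vec_unit[OF CT, of _ "k - 1"], auto)
  moreover have "unit_vec k (k - 1) \<noteq> 0\<^sub>v k" using k
    by (metis diff_less index_unit_vec(1) index_zero_vec(1) less_numeral_extra(1) zero_neq_one)
  ultimately have "det (transpose_mat C) = 0"
    using det_0_iff_vec_prod_zero[OF CT] by (meson unit_vec_carrier)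
  hence "det C = 0" using det_transpose[OF C] by simp
  thus ?thesis using det_0_iff_vec_prod_zero[OF C] by blast
qed

lemma count_lower:
  fixes A :: "real mat"
  assumes A: "A \<in> carrier_mat r d" and B: "B \<in> carrier_mat d k" and k: "0 < k"
    and inj: "\<forall>z\<in>carrier_vec k. z \<noteq> 0\<^sub>v k \<longrightarrow> B *\<^sub>v z \<noteq> 0\<^sub>v d"
    and low: "\<forall>z\<in>carrier_vec k. c * ((B *\<^sub>v z) \<bullet> (B *\<^sub>v z)) \<le> (A *\<^sub>v (B *\<^sub>v z)) \<bullet> (A *\<^sub>v (B *\<^sub>v z))"
    and QD: "Q \<in> carrier_mat d d" "D \<in> carrier_mat d d" "diagonal_mat D"
       "transpose_mat Q * Q = 1\<^sub>m d" "Q * transpose_mat Q = 1\<^sub>m d"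
       "transpose_mat A * A = Q * D * transpose_mat Q"
  shows "k \<le> card {i. i < d \<and> c \<le> D $$ (i,i)}"
proof (rule ccontr)
  define S where "S = {i. i < d \<and> c \<le> D $$ (i,i)}"
  assume "\<not> k \<le> card {i. i < d \<and> c \<le> D $$ (i,i)}"
  hence sk: "card S < k" unfolding S_def by simp
  have fS: "finite S" unfolding S_def by simp
  define s where "s = card S"
  define f where "f j = sorted_list_of_set S ! j" for j
  have fS1: "f j \<in> S" if "j < s" for j
    using that fS unfolding f_def s_def by (metis length_sorted_list_of_set nth_mem set_sorted_list_of_set)
  have fS2: "\<exists>j<s. f j = i" if "i \<in> S" for i
    using that fS unfolding f_def s_def by (metis in_set_conv_nth length_sorted_list_of_set set_sorted_list_of_set)
  have Sd: "i \<in> S \<Longrightarrow> i < d" for i unfolding S_def by simp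
  define R where "R = mat k d (\<lambda>(j,i). if j < s then transpose_mat Q $$ (f j, i) else 0)"
  have R: "R \<in> carrier_mat k d" unfolding R_def by simp
  define C where "C = R * B"
  have C: "C \<in> carrier_mat k k" unfolding C_def using R B by simp
  have zr: "\<forall>l<k. C $$ (k - 1, l) = 0"
  proof -
    have "\<not> (k - Suc 0 < card S)" using sk by simp
    thus ?thesis using k B unfolding C_def R_def s_def by (auto simp: scalar_prod_def)
  qed
  obtain z where z: "z \<in> carrier_vec k" "z \<noteq> 0\<^sub>v k" "C *\<^sub>v z = 0\<^sub>v k"
    using wide_kernel[OF C k zr] by blast
  define x where "x = B *\<^sub>v z"
  have x: "x \<in> carrier_vec d" "x \<noteq> 0\<^sub>v d" unfolding x_def using B z inj by auto
  define y where "y = transpose_mat Q *\<^sub>v x"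
  have y: "y \<in> carrier_vec d" unfolding y_def using QD x by simp
  have "R *\<^sub>v x = C *\<^sub>v z" unfolding x_def C_def using z R B
    by (simp add: assoc_mult_mat_vec[of _ k d _ k])
  hence Rx: "R *\<^sub>v x = 0\<^sub>v k" using z(3) by simp
  have yS: "y $ i = 0" if i: "i \<in> S" for i
  proof -
    obtain j where j: "j < s" "f j = i" using fS2[OF i] by blast
    have jk: "j < k" using j sk s_def by simp
    have fd: "f j < d" using fS1[OF j(1)] Sd by blast
    have "(R *\<^sub>v x) $ j = (\<Sum>l<d. R $$ (j,l) * x $ l)" by (rule mult_mat_vec_sum[OF R x(1) jk])
    also have "\<dots> = (\<Sum>l<d. transpose_mat Q $$ (f j, l) * x $ l)"
      by (rule sum.cong, insert j jk, auto simp: R_def)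
    also have "\<dots> = y $ (f j)" unfolding y_def
      by (rule mult_mat_vec_sum[symmetric], insert QD x fd, auto)
    finally show ?thesis using Rx jk j by simp
  qed
  have xx: "x \<bullet> x = (\<Sum>i<d. (y $ i)^2)" unfolding y_def by (rule quad_form(2)[OF A QD(1,2,3,5,6) x(1)])
  have Axx: "(A *\<^sub>v x) \<bullet> (A *\<^sub>v x) = (\<Sum>i<d. D $$ (i,i) * (y $ i)^2)"
    unfolding y_def by (rule quad_form(1)[OF A QD(1,2,3,5,6) x(1)])
  have "x \<bullet> x > 0" using sprod_self_pos[OF x] .
  then obtain i1 where i1: "i1 < d" "y $ i1 \<noteq> 0" unfolding xx
    by (metis (no_types, lifting) less_irrefl power_zero_numeral sum.neutral lessThan_iff)
  have "(\<Sum>i<d. D $$ (i,i) * (y $ i)^2) < (\<Sum>i<d. c * (y $ i)^2)"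
  proof (rule sum_strict_mono_ex1)
    show "\<forall>i\<in>{..<d}. D $$ (i,i) * (y $ i)^2 \<le> c * (y $ i)^2"
    proof
      fix i assume "i \<in> {..<d}"
      show "D $$ (i,i) * (y $ i)^2 \<le> c * (y $ i)^2"
      proof (cases "i \<in> S")
        case True thus ?thesis using yS by simp
      next
        case False thus ?thesis using \<open>i \<in> {..<d}\<close> unfolding S_def
          by (intro mult_right_mono) auto
      qed
    qed
    have "i1 \<notin> S" using yS i1 by blast
    hence "D $$ (i1,i1) < c" using i1 unfolding S_def by simp
    moreover have "(y $ i1)^2 > 0" using i1 by simp
    ultimately show "\<exists>i\<in>{..<d}. D $$ (i,i) * (y $ i)^2 < c * (y $ i)^2"
      using i1 by (intro bexI[of _ i1]) auto
  qed simp
  hence "(A *\<^sub>v x) \<bullet> (A *\<^sub>v x) < c * (x \<bullet> x)" unfolding Axx xx by (simp add: sum_distrib_left)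
  moreover have "c * (x \<bullet> x) \<le> (A *\<^sub>v x) \<bullet> (A *\<^sub>v x)" using low z unfolding x_def by blast
  ultimately show False by simp
qed

lemma sigma_lower:
  fixes A :: "real mat"
  assumes A: "A \<in> carrier_mat r d" and B: "B \<in> carrier_mat d k" and k: "0 < k" "k \<le> d"
    and inj: "\<forall>z\<in>carrier_vec k. z \<noteq> 0\<^sub>v k \<longrightarrow> B *\<^sub>v z \<noteq> 0\<^sub>v d"
    and low: "\<forall>z\<in>carrier_vec k. c * ((B *\<^sub>v z) \<bullet> (B *\<^sub>v z)) \<le> (A *\<^sub>v (B *\<^sub>v z)) \<bullet> (A *\<^sub>v (B *\<^sub>v z))"
  shows "sqrt c \<le> sigma k A"
proof -
  obtain Q D where QD: "Q \<in> carrier_mat d d" "D \<in> carrier_mat d d" "diagonal_mat D"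
       "transpose_mat Q * Q = 1\<^sub>m d" "Q * transpose_mat Q = 1\<^sub>m d"
       "transpose_mat A * A = Q * D * transpose_mat Q"
       "singular_values A = rev (sort (map sqrt (diag_mat D)))"
    using sv_decomp[OF A] by blast
  have cnt: "k \<le> card {i. i < d \<and> c \<le> D $$ (i,i)}"
    by (rule count_lower[OF A B k(1) inj low QD(1-6)])
  define ds where "ds = map sqrt (diag_mat D)"
  define xs where "xs = sort ds"
  have lends: "length ds = d" unfolding ds_def using QD(2) by (simp add: diag_mat_def)
  have len: "length xs = d" unfolding xs_def using lends by simp
  have sig: "sigma k A = xs ! (d - k)"
    unfolding sigma_def QD(7) ds_def[symmetric] xs_def[symmetric] using k len by (simp add: rev_nth)
  show ?thesis
  proof (rule ccontr)
    assume "\<not> sqrt c \<le> sigma k A"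
    hence lt: "xs ! (d - k) < sqrt c" using sig by simp
    have "{j. j < length xs \<and> sqrt c \<le> xs ! j} \<subseteq> {d - k + 1..<d}"
    proof
      fix j assume j: "j \<in> {j. j < length xs \<and> sqrt c \<le> xs ! j}"
      have "\<not> j \<le> d - k"
      proof
        assume "j \<le> d - k"
        hence "xs ! j \<le> xs ! (d - k)" using sorted_nth_mono[of xs j "d - k"] len k unfolding xs_def by simp
        thus False using j lt by simp
      qed
      thus "j \<in> {d - k + 1..<d}" using j len by auto
    qed
    hence "card {j. j < length xs \<and> sqrt c \<le> xs ! j} \<le> card {d - k + 1..<d}"
      by (rule card_mono[rotated]) simp
    also have "\<dots> = k - 1" using k by simp
    finally have c1: "length (filter (\<lambda>x. sqrt c \<le> x) xs) \<le> k - 1"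
      by (simp add: length_filter_conv_card)
    have "length (filter (\<lambda>x. sqrt c \<le> x) xs) = length (filter (\<lambda>x. sqrt c \<le> x) ds)"
      unfolding xs_def by (metis mset_filter mset_sort size_mset)
    also have "\<dots> = card {j. j < length ds \<and> sqrt c \<le> ds ! j}" by (rule length_filter_conv_card)
    also have "{j. j < length ds \<and> sqrt c \<le> ds ! j} = {i. i < d \<and> c \<le> D $$ (i,i)}"
      unfolding ds_def using QD(2) by (auto simp: diag_mat_def)
    finally show False using c1 cnt k by simp
  qed
qed



lemma CS_sum:
  fixes f g :: "'a \<Rightarrow> real"
  assumes "finite S"
  shows "(\<Sum>i\<in>S. f i * g i)^2 \<le> (\<Sum>i\<in>S. (f i)^2) * (\<Sum>i\<in>S. (g i)^2)"
proof -
  have "0 \<le> (\<Sum>i\<in>S. \<Sum>j\<in>S. (f i * g j - f j * g i)^2)"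
    by (intro sum_nonneg) auto
  also have "\<dots> = (\<Sum>i\<in>S. \<Sum>j\<in>S. (f i)^2 * (g j)^2 + (f j)^2 * (g i)^2 - 2 * ((f i * g i) * (f j * g j)))"
    by (intro sum.cong refl) (simp add: power2_eq_square algebra_simps)
  also have "\<dots> = (\<Sum>i\<in>S. \<Sum>j\<in>S. (f i)^2 * (g j)^2) + (\<Sum>i\<in>S. \<Sum>j\<in>S. (f j)^2 * (g i)^2)
      - 2 * (\<Sum>i\<in>S. \<Sum>j\<in>S. (f i * g i) * (f j * g j))"
    by (simp add: sum.distrib sum_subtractf sum_distrib_left)
  also have "(\<Sum>i\<in>S. \<Sum>j\<in>S. (f j)^2 * (g i)^2) = (\<Sum>i\<in>S. \<Sum>j\<in>S. (f i)^2 * (g j)^2)"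
    by (rule sum.swap)
  also have "(\<Sum>i\<in>S. \<Sum>j\<in>S. (f i)^2 * (g j)^2) = (\<Sum>i\<in>S. (f i)^2) * (\<Sum>i\<in>S. (g i)^2)"
    by (rule sum_product[symmetric])
  also have "(\<Sum>i\<in>S. \<Sum>j\<in>S. (f i * g i) * (f j * g j)) = (\<Sum>i\<in>S. f i * g i)^2"
    by (simp add: power2_eq_square sum_product)
  finally show ?thesis by simp
qed

lemma sum_pairs: "(\<Sum>i\<in>A. \<Sum>j\<in>B. g i j) = (\<Sum>p\<in>A\<times>B. g (fst p) (snd p))"
  by (subst sum.cartesian_product) (simp add: case_prod_beta)

lemma CS_vec:
  fixes a b :: "real vec"
  assumes "a \<in> carrier_vec n" "b \<in> carrier_vec n"
  shows "(a \<bullet> b)^2 \<le> (a \<bullet> a) * (b \<bullet> b)"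
  using CS_sum[of "{..<n}" "\<lambda>i. a $ i" "\<lambda>i. b $ i"] assms
  by (simp add: scalar_prod_def atLeast0LessThan power2_eq_square)

lemma transpose_bound:
  fixes A :: "real mat"
  assumes A: "A \<in> carrier_mat r c" and mu: "0 \<le> \<mu>"
    and bd: "\<forall>u\<in>carrier_vec c. (A *\<^sub>v u) \<bullet> (A *\<^sub>v u) \<le> \<mu> * (u \<bullet> u)"
    and y: "y \<in> carrier_vec r"
  shows "(transpose_mat A *\<^sub>v y) \<bullet> (transpose_mat A *\<^sub>v y) \<le> \<mu> * (y \<bullet> y)"
proof -
  define u where "u = transpose_mat A *\<^sub>v y"
  have u: "u \<in> carrier_vec c" unfolding u_def using A y by simp
  have uu: "u \<bullet> u = y \<bullet> (A *\<^sub>v u)" unfolding u_def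
    using transpose_vec_mult_scalar[OF A u y] by (simp add: u_def)
  have "(u \<bullet> u)^2 \<le> (y \<bullet> y) * ((A *\<^sub>v u) \<bullet> (A *\<^sub>v u))"
    unfolding uu by (rule CS_vec[OF y]) (use A u in simp)
  also have "\<dots> \<le> (y \<bullet> y) * (\<mu> * (u \<bullet> u))"
    by (rule mult_left_mono, use bd u in simp, rule sprod_self_nonneg[OF y])
  finally have h: "(u \<bullet> u) * (u \<bullet> u) \<le> (\<mu> * (y \<bullet> y)) * (u \<bullet> u)"
    by (simp add: power2_eq_square mult_ac)
  show ?thesis
  proof (cases "u \<bullet> u = 0")
    case True thus ?thesis unfolding u_def[symmetric] using mu sprod_self_nonneg[OF y] by simp
  next
    case False
    hence "u \<bullet> u > 0" using sprod_self_nonneg[OF u] by simp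
    thus ?thesis unfolding u_def[symmetric] using h by simp
  qed
qed

lemma frob_bound:
  fixes E :: "real mat"
  assumes E: "E \<in> carrier_mat d d" and y: "y \<in> carrier_vec d"
  shows "\<bar>y \<bullet> (E *\<^sub>v y)\<bar> \<le> frob_norm E * (y \<bullet> y)"
proof -
  let ?S = "{..<d} \<times> {..<d}"
  have "y \<bullet> (E *\<^sub>v y) = (\<Sum>i<d. y $ i * (\<Sum>j<d. E $$ (i,j) * y $ j))"
    using E y by (simp add: scalar_prod_def atLeast0LessThan)
  also have "\<dots> = (\<Sum>i<d. \<Sum>j<d. E $$ (i,j) * (y $ i * y $ j))"
    by (simp add: sum_distrib_left mult_ac)
  also have "\<dots> = (\<Sum>p\<in>?S. E $$ p * (y $ fst p * y $ snd p))"
    by (subst sum_pairs) simp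
  finally have e1: "y \<bullet> (E *\<^sub>v y) = (\<Sum>p\<in>?S. E $$ p * (y $ fst p * y $ snd p))" .
  have fr: "(\<Sum>p\<in>?S. (E $$ p)^2) = (frob_norm E)^2"
    using E by (simp add: frob_norm_def sum_pairs[of "\<lambda>i j. (E $$ (i,j))^2"] sum_nonneg)
  have "(\<Sum>p\<in>?S. (y $ fst p * y $ snd p)^2) = (\<Sum>i<d. \<Sum>j<d. (y $ i * y $ j)^2)"
    by (rule sum_pairs[symmetric])
  also have "\<dots> = (\<Sum>i<d. (y $ i)^2) * (\<Sum>j<d. (y $ j)^2)"
    by (simp add: sum_product power_mult_distrib)
  also have "\<dots> = (y \<bullet> y)^2" by (simp add: sprod_self_sum[OF y] power2_eq_square)
  finally have yy: "(\<Sum>p\<in>?S. (y $ fst p * y $ snd p)^2) = (y \<bullet> y)^2" .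
  have "(y \<bullet> (E *\<^sub>v y))^2 \<le> (frob_norm E)^2 * (y \<bullet> y)^2"
    unfolding e1 using CS_sum[of ?S "\<lambda>p. E $$ p" "\<lambda>p. y $ fst p * y $ snd p"] fr yy by simp
  also have "\<dots> = (frob_norm E * (y \<bullet> y))^2" by (simp add: power_mult_distrib)
  finally have "(y \<bullet> (E *\<^sub>v y))^2 \<le> (frob_norm E * (y \<bullet> y))^2" .
  moreover have "frob_norm E * (y \<bullet> y) \<ge> 0"
    using sprod_self_nonneg[OF y] by (simp add: frob_norm_def sum_nonneg)
  ultimately show ?thesis using abs_le_square_iff by (metis abs_of_nonneg)
qed



lemma nsq_mult:
  fixes A :: "real mat"
  assumes A: "A \<in> carrier_mat r c" and y: "y \<in> carrier_vec c"
  shows "(A *\<^sub>v y) \<bullet> (A *\<^sub>v y) = y \<bullet> ((transpose_mat A * A) *\<^sub>v y)"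
proof -
  have "(A *\<^sub>v y) \<bullet> (A *\<^sub>v y) = (transpose_mat A *\<^sub>v (A *\<^sub>v y)) \<bullet> y"
    using transpose_vec_mult_scalar[of A r c y "A *\<^sub>v y"] A y by simp
  also have "\<dots> = y \<bullet> ((transpose_mat A * A) *\<^sub>v y)"
    using A y by (simp add: assoc_mult_mat_vec[of _ c r _ c] comm_scalar_prod[of _ c])
  finally show ?thesis .
qed

lemma nsq_mult_T:
  fixes A :: "real mat"
  assumes A: "A \<in> carrier_mat r c" and y: "y \<in> carrier_vec r"
  shows "(transpose_mat A *\<^sub>v y) \<bullet> (transpose_mat A *\<^sub>v y) = y \<bullet> ((A * transpose_mat A) *\<^sub>v y)"
  using nsq_mult[of "transpose_mat A" c r y] A y by simp

lemma card_block:
  assumes n: "n > 0" and i: "i < K"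
  shows "card {j. j < n * K \<and> j div n = i} = n"
proof -
  have dv: "(j div n = i) = (i*n \<le> j \<and> j < i*n+n)" for j
    using n by (metis add.commute div_nat_eqI div_times_less_eq_dividend
    dividend_less_div_times mult.commute mult_Suc)
  have "i * n + n \<le> K * n" using i by (metis Suc_leI add.commute mult_Suc mult_le_mono1)
  hence "{j. j < n * K \<and> j div n = i} = {i * n..<i * n + n}"
    unfolding dv by (auto simp: mult.commute)
  thus ?thesis by simp
qed

lemma label_YYT:
  assumes n: "n > 0"
  shows "label_mat K n * transpose_mat (label_mat K n) = real n \<cdot>\<^sub>m 1\<^sub>m K"
proof (rule eq_matI)
  fix i i' assume "i < dim_row (real n \<cdot>\<^sub>m 1\<^sub>m K)" "i' < dim_col (real n \<cdot>\<^sub>m 1\<^sub>m K)"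
  hence i: "i < K" and i': "i' < K" by auto
  have "(label_mat K n * transpose_mat (label_mat K n)) $$ (i,i') =
     (\<Sum>j<n*K. (if j div n = i then 1 else 0) * (if j div n = i' then 1 else (0::real)))"
    using i i' by (simp add: label_mat_def scalar_prod_def atLeast0LessThan)
  also have "\<dots> = (\<Sum>j\<in>{j. j < n * K \<and> j div n = i}. if i = i' then 1 else 0)"
    by (rule sum.mono_neutral_cong_right) auto
  also have "\<dots> = (if i = i' then real n else 0)" using card_block[OF n i] by simp
  finally show "(label_mat K n * transpose_mat (label_mat K n)) $$ (i,i') = (real n \<cdot>\<^sub>m 1\<^sub>m K) $$ (i,i')"
    using i i' by simp
qed (auto simp: label_mat_def)

lemma label_bound:
  assumes n: "n > 0" and w: "w \<in> carrier_vec (n * K)"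
  shows "(label_mat K n *\<^sub>v w) \<bullet> (label_mat K n *\<^sub>v w) \<le> real n * (w \<bullet> w)"
proof -
  let ?Y = "label_mat K n"
  have Y: "?Y \<in> carrier_mat K (n * K)" by (simp add: label_mat_def)
  have YT: "transpose_mat ?Y \<in> carrier_mat (n * K) K" using Y by simp
  have "\<forall>u\<in>carrier_vec K. (transpose_mat ?Y *\<^sub>v u) \<bullet> (transpose_mat ?Y *\<^sub>v u) \<le> real n * (u \<bullet> u)"
  proof
    fix u :: "real vec" assume u: "u \<in> carrier_vec K"
    have "(transpose_mat ?Y *\<^sub>v u) \<bullet> (transpose_mat ?Y *\<^sub>v u) = u \<bullet> ((real n \<cdot>\<^sub>m 1\<^sub>m K) *\<^sub>v u)"
      using nsq_mult_T[OF Y u] label_YYT[OF n] by simp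
    also have "(real n \<cdot>\<^sub>m 1\<^sub>m K) *\<^sub>v u = real n \<cdot>\<^sub>v u" using u by auto
    also have "u \<bullet> (real n \<cdot>\<^sub>v u) = real n * (u \<bullet> u)" using u by simp
    finally show "(transpose_mat ?Y *\<^sub>v u) \<bullet> (transpose_mat ?Y *\<^sub>v u) \<le> real n * (u \<bullet> u)" by simp
  qed
  from transpose_bound[OF YT _ this w] show ?thesis by simp
qed



lemma frob_nonneg: "0 \<le> frob_norm A"
  unfolding frob_norm_def by (intro real_sqrt_ge_zero sum_nonneg) auto

lemma core:
  fixes W :: "nat \<Rightarrow> real mat" and e :: real and B0 :: "real mat"
  assumes L2: "L \<ge> 2" and d: "d > 0" and K: "K > 0" and n: "n > 0"
    and Wc: "\<forall>l\<in>{1..<L}. W l \<in> carrier_mat d d" and WL: "W L \<in> carrier_mat K d"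
    and bal: "\<forall>l\<in>{1..L-2}. transpose_mat (W (l+1)) * W (l+1) = W l * transpose_mat (W l)"
    and fr: "frob_norm (transpose_mat (W L) * W L - W (L-1) * transpose_mat (W (L-1))) \<le> e"
    and Pup: "\<forall>x\<in>carrier_vec d. (wprod W L d *\<^sub>v x) \<bullet> (wprod W L d *\<^sub>v x) \<le> real n * (x \<bullet> x)"
    and B0: "B0 \<in> carrier_mat d K"
    and Peq: "\<forall>z\<in>carrier_vec K. (wprod W L d *\<^sub>v (B0 *\<^sub>v z)) \<bullet> (wprod W L d *\<^sub>v (B0 *\<^sub>v z))
                 = real n * ((B0 *\<^sub>v z) \<bullet> (B0 *\<^sub>v z))"
    and Pnz: "\<forall>z\<in>carrier_vec K. z \<noteq> 0\<^sub>v K \<longrightarrow> wprod W L d *\<^sub>v (B0 *\<^sub>v z) \<noteq> 0\<^sub>v K"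
  shows "\<exists>\<mu>. 0 < \<mu> \<and> \<mu>^(L-1) * (\<mu> - e) \<le> real n \<and>
     (\<forall>l\<in>{1..<L}. \<forall>y\<in>carrier_vec d. (W l *\<^sub>v y) \<bullet> (W l *\<^sub>v y) \<le> \<mu> * (y \<bullet> y)) \<and>
     (\<forall>y\<in>carrier_vec d. (W L *\<^sub>v y) \<bullet> (W L *\<^sub>v y) \<le> (\<mu> + e) * (y \<bullet> y)) \<and>
     (\<forall>l\<in>{1..L}. \<forall>z\<in>carrier_vec K.
        real n * ((wprod W (l-1) d *\<^sub>v (B0 *\<^sub>v z)) \<bullet> (wprod W (l-1) d *\<^sub>v (B0 *\<^sub>v z)))
          \<le> (\<mu> + e) * \<mu>^(L-2) * ((W l *\<^sub>v (wprod W (l-1) d *\<^sub>v (B0 *\<^sub>v z))) \<bullet> (W l *\<^sub>v (wprod W (l-1) d *\<^sub>v (B0 *\<^sub>v z))))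
        \<and> (z \<noteq> 0\<^sub>v K \<longrightarrow> wprod W (l-1) d *\<^sub>v (B0 *\<^sub>v z) \<noteq> 0\<^sub>v d))"
proof -
  define P where "P l = wprod W l d" for l
  define Lm where "Lm = L - 1"
  have LLm: "L = Suc Lm" and Lm1: "Lm \<ge> 1" and LmL: "Lm < L" using L2 unfolding Lm_def by auto
  have Pc: "l < L \<Longrightarrow> P l \<in> carrier_mat d d" for l
  proof (induction l)
    case 0 thus ?case by (simp add: P_def)
  next
    case (Suc l)
    have "W (Suc l) \<in> carrier_mat d d" using Wc Suc.prems by auto
    thus ?case using Suc by (simp add: P_def)
  qed
  have Psuc: "P (Suc l) = W (Suc l) * P l" for l by (simp add: P_def)
  have Wd: "1 \<le> l \<Longrightarrow> l < L \<Longrightarrow> W l \<in> carrier_mat d d" for l using Wc by auto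
  have Pv: "P (Suc l) *\<^sub>v v = W (Suc l) *\<^sub>v (P l *\<^sub>v v)" if "Suc l < L" "v \<in> carrier_vec d" for l v
    unfolding Psuc using Wd[of "Suc l"] Pc[of l] that by (simp add: assoc_mult_mat_vec[of _ d d _ d])
  have PvL: "P L *\<^sub>v v = W L *\<^sub>v (P Lm *\<^sub>v v)" if "v \<in> carrier_vec d" for v
    unfolding LLm Psuc using WL Pc[OF LmL] that LLm by (simp add: assoc_mult_mat_vec[of _ K d _ d])
  have P0: "P 0 *\<^sub>v v = v" if "v \<in> carrier_vec d" for v using that by (simp add: P_def)
  have e0: "0 \<le> e" using fr frob_nonneg order_trans by blast
  have W1: "W 1 \<in> carrier_mat d d" using Wd L2 by simp
  obtain x \<mu> where x: "x \<in> carrier_vec d" "x \<bullet> x = 1" "(transpose_mat (W 1) * W 1) *\<^sub>v x = \<mu> \<cdot>\<^sub>v x"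
     and top: "\<forall>y\<in>carrier_vec d. (W 1 *\<^sub>v y) \<bullet> (W 1 *\<^sub>v y) \<le> \<mu> * (y \<bullet> y)"
    using top_eig[OF W1 d] by blast
  have W1x: "(W 1 *\<^sub>v x) \<bullet> (W 1 *\<^sub>v x) = \<mu>"
    using nsq_mult[OF W1 x(1)] x by simp
  have mu0: "0 \<le> \<mu>" using W1x sprod_self_nonneg[of "W 1 *\<^sub>v x" d] W1 x by simp
  have lay: "\<forall>y\<in>carrier_vec d. (W l *\<^sub>v y) \<bullet> (W l *\<^sub>v y) \<le> \<mu> * (y \<bullet> y)" if "1 \<le> l" "l < L" for l
    using that
  proof (induction l)
    case 0 thus ?case by simp
  next
    case (Suc k)
    show ?case
    proof (cases "k = 0")
      case True thus ?thesis using top by simp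
    next
      case False
      hence k: "1 \<le> k" "k < L" using Suc by auto
      have IH: "\<forall>y\<in>carrier_vec d. (W k *\<^sub>v y) \<bullet> (W k *\<^sub>v y) \<le> \<mu> * (y \<bullet> y)" using Suc.IH k by simp
      have b: "transpose_mat (W (Suc k)) * W (Suc k) = W k * transpose_mat (W k)"
        using bal Suc k by auto
      show ?thesis
      proof
        fix y :: "real vec" assume y: "y \<in> carrier_vec d"
        have "(W (Suc k) *\<^sub>v y) \<bullet> (W (Suc k) *\<^sub>v y) = y \<bullet> ((W k * transpose_mat (W k)) *\<^sub>v y)"
          using nsq_mult[OF Wd[of "Suc k"] y] Suc b by simp
        also have "\<dots> = (transpose_mat (W k) *\<^sub>v y) \<bullet> (transpose_mat (W k) *\<^sub>v y)"
          using nsq_mult_T[OF Wd[OF k] y] by simp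
        also have "\<dots> \<le> \<mu> * (y \<bullet> y)" by (rule transpose_bound[OF Wd[OF k] mu0 IH y])
        finally show "(W (Suc k) *\<^sub>v y) \<bullet> (W (Suc k) *\<^sub>v y) \<le> \<mu> * (y \<bullet> y)" .
      qed
    qed
  qed
  define N where "N = W Lm * transpose_mat (W Lm)"
  define E where "E = transpose_mat (W L) * W L - N"
  have WLm: "W Lm \<in> carrier_mat d d" using Wd Lm1 LmL by simp
  have Nc: "N \<in> carrier_mat d d" unfolding N_def using WLm by simp
  have Ec: "E \<in> carrier_mat d d" unfolding E_def using WL Nc by (intro minus_carrier_mat) auto
  have frE: "frob_norm E \<le> e" using fr unfolding E_def N_def Lm_def .
  have split: "(W L *\<^sub>v y) \<bullet> (W L *\<^sub>v y) = (transpose_mat (W Lm) *\<^sub>v y) \<bullet> (transpose_mat (W Lm) *\<^sub>v y) + y \<bullet> (E *\<^sub>v y)"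
    if y: "y \<in> carrier_vec d" for y
  proof -
    have M: "transpose_mat (W L) * W L \<in> carrier_mat d d" using WL by simp
    have "y \<bullet> (E *\<^sub>v y) = y \<bullet> ((transpose_mat (W L) * W L) *\<^sub>v y) - y \<bullet> (N *\<^sub>v y)"
      unfolding E_def using M Nc y
      by (simp add: minus_mult_distrib_mat_vec[OF M Nc y] scalar_prod_minus_distrib[of y d])
    thus ?thesis using nsq_mult[OF WL y] nsq_mult_T[OF WLm y] unfolding N_def by simp
  qed
  have Eb: "\<bar>y \<bullet> (E *\<^sub>v y)\<bar> \<le> e * (y \<bullet> y)" if y: "y \<in> carrier_vec d" for y
    using frob_bound[OF Ec y] frE sprod_self_nonneg[OF y] by (meson mult_right_mono order_trans)
  have lastb: "(W L *\<^sub>v y) \<bullet> (W L *\<^sub>v y) \<le> (\<mu> + e) * (y \<bullet> y)" if y: "y \<in> carrier_vec d" for y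
  proof -
    have "(transpose_mat (W Lm) *\<^sub>v y) \<bullet> (transpose_mat (W Lm) *\<^sub>v y) \<le> \<mu> * (y \<bullet> y)"
      by (rule transpose_bound[OF WLm mu0 lay[OF Lm1 LmL] y])
    thus ?thesis using split[OF y] Eb[OF y] by (simp add: algebra_simps)
  qed
  have eig: "(W (Suc k) * transpose_mat (W (Suc k))) *\<^sub>v (P (Suc k) *\<^sub>v x) = \<mu> \<cdot>\<^sub>v (P (Suc k) *\<^sub>v x)
      \<and> (P (Suc k) *\<^sub>v x) \<bullet> (P (Suc k) *\<^sub>v x) = \<mu>^(Suc k)" if "Suc k < L" for k
    using that
  proof (induction k)
    case 0
    have P1: "P 1 *\<^sub>v x = W 1 *\<^sub>v x" using Pv[of 0 x] 0 x P0 by simp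
    have "(W 1 * transpose_mat (W 1)) *\<^sub>v (W 1 *\<^sub>v x) = W 1 *\<^sub>v ((transpose_mat (W 1) * W 1) *\<^sub>v x)"
      using W1 x by (simp add: assoc_mult_mat_vec[of _ d d _ d])
    also have "\<dots> = \<mu> \<cdot>\<^sub>v (W 1 *\<^sub>v x)" using x W1 by (simp add: mult_mat_vec)
    finally show ?case using P1 W1x by simp
  next
    case (Suc k)
    define u where "u = P (Suc k) *\<^sub>v x"
    have u: "u \<in> carrier_vec d" unfolding u_def using Pc[of "Suc k"] Suc x by simp
    have IH: "(W (Suc k) * transpose_mat (W (Suc k))) *\<^sub>v u = \<mu> \<cdot>\<^sub>v u" "u \<bullet> u = \<mu>^(Suc k)"
      using Suc unfolding u_def by auto
    define A where "A = W (Suc (Suc k))"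
    have A: "A \<in> carrier_mat d d" unfolding A_def using Wd Suc by simp
    have b: "transpose_mat A * A = W (Suc k) * transpose_mat (W (Suc k))"
      using bal Suc unfolding A_def by auto
    have Au: "(transpose_mat A * A) *\<^sub>v u = \<mu> \<cdot>\<^sub>v u" using IH b by simp
    have PS: "P (Suc (Suc k)) *\<^sub>v x = A *\<^sub>v u" unfolding A_def u_def using Pv[of "Suc k" x] Suc x by simp
    have "(A * transpose_mat A) *\<^sub>v (A *\<^sub>v u) = A *\<^sub>v ((transpose_mat A * A) *\<^sub>v u)"
      using A u by (simp add: assoc_mult_mat_vec[of _ d d _ d])
    also have "\<dots> = \<mu> \<cdot>\<^sub>v (A *\<^sub>v u)" using Au A u by (simp add: mult_mat_vec)
    finally have e1: "(A * transpose_mat A) *\<^sub>v (A *\<^sub>v u) = \<mu> \<cdot>\<^sub>v (A *\<^sub>v u)" .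
    have "(A *\<^sub>v u) \<bullet> (A *\<^sub>v u) = \<mu> * (u \<bullet> u)" using nsq_mult[OF A u] Au u by simp
    thus ?case using e1 PS IH(2) unfolding A_def by simp
  qed
  have star: "\<mu>^(L-1) * (\<mu> - e) \<le> real n"
  proof -
    obtain j where j: "Lm = Suc j" using Lm1 by (cases Lm) auto
    define u where "u = P Lm *\<^sub>v x"
    have u: "u \<in> carrier_vec d" unfolding u_def using Pc[OF LmL] x by simp
    have eu: "N *\<^sub>v u = \<mu> \<cdot>\<^sub>v u" "u \<bullet> u = \<mu>^Lm" using eig[of j] j LmL unfolding u_def N_def by auto
    have "(transpose_mat (W Lm) *\<^sub>v u) \<bullet> (transpose_mat (W Lm) *\<^sub>v u) = \<mu> * \<mu>^Lm"
      using nsq_mult_T[OF WLm u] eu u unfolding N_def by simp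
    hence "(P L *\<^sub>v x) \<bullet> (P L *\<^sub>v x) \<ge> \<mu> * \<mu>^Lm - e * \<mu>^Lm"
      using split[OF u] Eb[OF u] PvL[OF x(1)] eu(2) unfolding u_def by (simp add: abs_le_iff)
    moreover have "(P L *\<^sub>v x) \<bullet> (P L *\<^sub>v x) \<le> real n" using Pup x unfolding P_def by force
    ultimately show ?thesis unfolding Lm_def by (simp add: algebra_simps)
  qed
  have chain: "(P b *\<^sub>v v) \<bullet> (P b *\<^sub>v v) \<le> \<mu>^(b-a) * ((P a *\<^sub>v v) \<bullet> (P a *\<^sub>v v))"
    if "v \<in> carrier_vec d" "a \<le> b" "b < L" for a b v
    using that
  proof (induction b)
    case 0 thus ?case by simp
  next
    case (Suc b)
    show ?case
    proof (cases "a = Suc b")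
      case True thus ?thesis by simp
    next
      case False
      hence ab: "a \<le> b" "b < L" using Suc by auto
      have pb: "P b *\<^sub>v v \<in> carrier_vec d" using Pc[OF ab(2)] Suc by simp
      have "(P (Suc b) *\<^sub>v v) \<bullet> (P (Suc b) *\<^sub>v v) = (W (Suc b) *\<^sub>v (P b *\<^sub>v v)) \<bullet> (W (Suc b) *\<^sub>v (P b *\<^sub>v v))"
        using Pv Suc by simp
      also have "\<dots> \<le> \<mu> * ((P b *\<^sub>v v) \<bullet> (P b *\<^sub>v v))" using lay[of "Suc b"] Suc pb by simp
      also have "\<dots> \<le> \<mu> * (\<mu>^(b-a) * ((P a *\<^sub>v v) \<bullet> (P a *\<^sub>v v)))"
        using Suc.IH[OF Suc.prems(1) ab] mu0 by (simp add: mult_left_mono)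
      also have "\<dots> = \<mu>^(Suc b - a) * ((P a *\<^sub>v v) \<bullet> (P a *\<^sub>v v))"
        using ab by (simp add: Suc_diff_le)
      finally show ?thesis .
    qed
  qed
  have chainL: "(P L *\<^sub>v v) \<bullet> (P L *\<^sub>v v) \<le> (\<mu> + e) * ((P Lm *\<^sub>v v) \<bullet> (P Lm *\<^sub>v v))"
    if "v \<in> carrier_vec d" for v
    using PvL[OF that] lastb[of "P Lm *\<^sub>v v"] Pc[OF LmL] that by simp
  have low: "real n * ((P (l-1) *\<^sub>v (B0 *\<^sub>v z)) \<bullet> (P (l-1) *\<^sub>v (B0 *\<^sub>v z)))
          \<le> (\<mu> + e) * \<mu>^(L-2) * ((W l *\<^sub>v (P (l-1) *\<^sub>v (B0 *\<^sub>v z))) \<bullet> (W l *\<^sub>v (P (l-1) *\<^sub>v (B0 *\<^sub>v z))))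
        \<and> (z \<noteq> 0\<^sub>v K \<longrightarrow> P (l-1) *\<^sub>v (B0 *\<^sub>v z) \<noteq> 0\<^sub>v d)"
    if l: "1 \<le> l" "l \<le> L" and z: "z \<in> carrier_vec K" for l z
  proof -
    define v where "v = B0 *\<^sub>v z"
    have v: "v \<in> carrier_vec d" unfolding v_def using B0 z by simp
    define x' where "x' = P (l-1) *\<^sub>v v"
    have Pl1: "P (l-1) \<in> carrier_mat d d" using Pc[of "l-1"] l by simp
    have x': "x' \<in> carrier_vec d" unfolding x'_def by (rule mult_mat_vec_carrier[OF Pl1 v])
    have Wl: "W l *\<^sub>v x' \<in> carrier_vec (if l = L then K else d)" using Wd[of l] WL l x' by auto
    have nx: "(x' \<bullet> x') \<le> \<mu>^(l-1) * (v \<bullet> v)"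
      using chain[OF v, of 0 "l-1"] l P0[OF v] unfolding x'_def by simp
    have PLv: "(P L *\<^sub>v v) \<bullet> (P L *\<^sub>v v) = real n * (v \<bullet> v)" using Peq z unfolding v_def P_def by simp
    have key: "(\<exists>C. (P L *\<^sub>v v) \<bullet> (P L *\<^sub>v v) \<le> C * ((W l *\<^sub>v x') \<bullet> (W l *\<^sub>v x')))
       \<and> \<mu>^(l-1) * ((P L *\<^sub>v v) \<bullet> (P L *\<^sub>v v)) \<le> (\<mu> + e) * \<mu>^(L-2) * ((W l *\<^sub>v x') \<bullet> (W l *\<^sub>v x'))"
    proof (cases "l = L")
      case True
      have eq: "(P L *\<^sub>v v) \<bullet> (P L *\<^sub>v v) = (W l *\<^sub>v x') \<bullet> (W l *\<^sub>v x')"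
        unfolding x'_def using PvL[OF v] True unfolding Lm_def by simp
      have nn: "0 \<le> (W l *\<^sub>v x') \<bullet> (W l *\<^sub>v x')" using sprod_self_nonneg Wl by blast
      have "\<mu>^(l-1) = \<mu> * \<mu>^(L-2)" using True L2 by (metis Suc_diff_Suc Suc_1 diff_Suc_1 power_Suc less_le_trans one_less_numeral_iff semiring_norm(76) Suc_le_lessD)
      hence "\<mu>^(l-1) \<le> (\<mu> + e) * \<mu>^(L-2)" using e0 mu0 by (simp add: mult_right_mono)
      hence "\<mu>^(l-1) * ((W l *\<^sub>v x') \<bullet> (W l *\<^sub>v x')) \<le> (\<mu> + e) * \<mu>^(L-2) * ((W l *\<^sub>v x') \<bullet> (W l *\<^sub>v x'))"
        using nn by (rule mult_right_mono)
      moreover have "\<exists>C. (P L *\<^sub>v v) \<bullet> (P L *\<^sub>v v) \<le> C * ((W l *\<^sub>v x') \<bullet> (W l *\<^sub>v x'))"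
        using eq by (intro exI[of _ 1]) simp
      ultimately show ?thesis using eq by simp
    next
      case False
      hence lL: "l < L" using l by simp
      have pl: "P l *\<^sub>v v = W l *\<^sub>v x'" unfolding x'_def using Pv[of "l-1" v] l lL v by simp
      have "(P L *\<^sub>v v) \<bullet> (P L *\<^sub>v v) \<le> (\<mu> + e) * ((P Lm *\<^sub>v v) \<bullet> (P Lm *\<^sub>v v))" by (rule chainL[OF v])
      also have "\<dots> \<le> (\<mu> + e) * (\<mu>^(Lm - l) * ((P l *\<^sub>v v) \<bullet> (P l *\<^sub>v v)))"
        using chain[OF v, of l Lm] lL LmL LLm mu0 e0 by (intro mult_left_mono) auto
      finally have k1: "(P L *\<^sub>v v) \<bullet> (P L *\<^sub>v v) \<le> (\<mu> + e) * \<mu>^(L-1-l) * ((W l *\<^sub>v x') \<bullet> (W l *\<^sub>v x'))"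
        using pl unfolding Lm_def by (simp add: mult.assoc)
      have "\<mu>^(l-1) * ((P L *\<^sub>v v) \<bullet> (P L *\<^sub>v v)) \<le> \<mu>^(l-1) * ((\<mu> + e) * \<mu>^(L-1-l) * ((W l *\<^sub>v x') \<bullet> (W l *\<^sub>v x')))"
        using k1 mu0 by (simp add: mult_left_mono)
      also have "\<dots> = (\<mu> + e) * (\<mu>^(l-1) * \<mu>^(L-1-l)) * ((W l *\<^sub>v x') \<bullet> (W l *\<^sub>v x'))" by (simp add: mult_ac)
      also have "\<mu>^(l-1) * \<mu>^(L-1-l) = \<mu>^(L-2)" using l lL by (simp add: power_add[symmetric])
      finally show ?thesis using k1 by blast
    qed
    have part1: "real n * (x' \<bullet> x') \<le> (\<mu> + e) * \<mu>^(L-2) * ((W l *\<^sub>v x') \<bullet> (W l *\<^sub>v x'))"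
    proof -
      have "real n * (x' \<bullet> x') \<le> real n * (\<mu>^(l-1) * (v \<bullet> v))" using nx by (simp add: mult_left_mono)
      also have "\<dots> = \<mu>^(l-1) * ((P L *\<^sub>v v) \<bullet> (P L *\<^sub>v v))" using PLv by simp
      finally show ?thesis using key by simp
    qed
    have part2: "x' \<noteq> 0\<^sub>v d" if zn: "z \<noteq> 0\<^sub>v K"
    proof
      assume x0: "x' = 0\<^sub>v d"
      have "W l *\<^sub>v x' = 0\<^sub>v (if l = L then K else d)" using x0 Wd[of l] WL l by auto
      hence "(W l *\<^sub>v x') \<bullet> (W l *\<^sub>v x') = 0" by simp
      hence "(P L *\<^sub>v v) \<bullet> (P L *\<^sub>v v) \<le> 0" using key by auto
      moreover have "P L *\<^sub>v v \<noteq> 0\<^sub>v K" using Pnz z zn unfolding v_def P_def by simp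
      moreover have "P L *\<^sub>v v \<in> carrier_vec K"
      proof -
        have "P L \<in> carrier_mat K d" unfolding LLm Psuc using WL Pc[OF LmL] LLm by simp
        thus ?thesis using v by simp
      qed
      ultimately show False using sprod_self_pos by fastforce
    qed
    show ?thesis using part1 part2 unfolding x'_def v_def by simp
  qed
  have mupos: "0 < \<mu>"
  proof (rule ccontr)
    assume "\<not> 0 < \<mu>"
    hence m0: "\<mu> = 0" using mu0 by simp
    define z :: "real vec" where "z = unit_vec K 0"
    have z: "z \<in> carrier_vec K" "z \<noteq> 0\<^sub>v K" unfolding z_def using K
      by (auto simp: unit_vec_def vec_eq_iff)
    define v where "v = B0 *\<^sub>v z"
    have v: "v \<in> carrier_vec d" unfolding v_def using B0 z by simp
    have vnz: "v \<noteq> 0\<^sub>v d" using low[of 1 z] L2 z P0[OF v] unfolding v_def by simp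
    have "real n * (v \<bullet> v) = (P L *\<^sub>v v) \<bullet> (P L *\<^sub>v v)" using Peq z unfolding v_def P_def by simp
    also have "\<dots> \<le> (\<mu> + e) * ((P Lm *\<^sub>v v) \<bullet> (P Lm *\<^sub>v v))" by (rule chainL[OF v])
    also have "\<dots> \<le> (\<mu> + e) * (\<mu>^(Lm - 0) * ((P 0 *\<^sub>v v) \<bullet> (P 0 *\<^sub>v v)))"
      using chain[OF v, of 0 Lm] LmL mu0 e0 by (intro mult_left_mono) auto
    also have "\<dots> = 0" using m0 Lm1 by simp
    finally have "real n * (v \<bullet> v) \<le> 0" .
    moreover have "v \<bullet> v > 0" by (rule sprod_self_pos[OF v vnz])
    ultimately show False using n by (simp add: mult_le_0_iff)
  qed
  show ?thesis
    apply (rule exI[of _ \<mu>])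
    using mupos star lay lastb low unfolding P_def by auto
qed



lemma sqrt_powr: "0 \<le> x \<Longrightarrow> sqrt x powr r = sqrt (x powr r)"
proof (cases "x = 0")
  case True thus ?thesis by simp
next
  case False
  assume "0 \<le> x"
  hence x: "0 < x" using False by simp
  have "sqrt x powr r = (x powr (1/2)) powr r" using x by (simp add: powr_half_sqrt)
  also have "\<dots> = (x powr r) powr (1/2)" by (simp add: powr_powr mult.commute)
  also have "\<dots> = sqrt (x powr r)" by (simp add: powr_half_sqrt)
  finally show ?thesis .
qed

lemma powr_inv_pow: "0 < x \<Longrightarrow> 0 < L \<Longrightarrow> (x powr (1 / real L)) ^ L = x"
  by (simp add: powr_realpow[symmetric] powr_powr)

lemma beta_bound:
  assumes L: "L \<ge> 1"
  shows "(1 + 1 / (15 * real L ^ 2)) ^ (L * L) \<le> 2"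
proof -
  define b where "b = 1 / (15 * real L ^ 2)"
  have "(1 + b) ^ (L * L) \<le> exp b ^ (L * L)"
    by (rule power_mono) (auto simp: b_def exp_ge_add_one_self add_nonneg_nonneg)
  also have "\<dots> = exp (real (L * L) * b)" by (rule exp_of_nat_mult[symmetric])
  also have "real (L * L) * b = 1 / 15" using L by (simp add: b_def power2_eq_square)
  also have "exp (1 / 15 :: real) \<le> exp (1 / 2)" by simp
  also have "\<dots> \<le> 2" by (rule exp_half_le2)
  finally show ?thesis unfolding b_def .
qed

lemma arith_main:
  fixes \<mu> e :: real and n L :: nat
  assumes L: "L \<ge> 2" and n: "n > 0" and mu: "\<mu> > 0" and e0: "e \<ge> 0"
    and eb: "e \<le> real n powr (1 / real L) / (30 * real L ^ 2)"
    and star: "\<mu>^(L-1) * (\<mu> - e) \<le> real n"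
  shows "\<mu> \<le> (2 * real n) powr (1 / real L)" "\<mu> + e \<le> (2 * real n) powr (1 / real L)"
    "(real n / 2) powr (1 / real L) * ((\<mu> + e) * \<mu>^(L-2)) \<le> real n"
proof -
  obtain j where Lj: "L = Suc (Suc j)" using L by (metis add_2_eq_Suc le_Suc_ex)
  define a where "a = real n powr (1 / real L)"
  define t where "t = (2::real) powr (1 / real L)"
  define \<beta> where "\<beta> = 1 + 1 / (15 * real L ^ 2)"
  have a0: "a > 0" unfolding a_def using n by simp
  have t0: "t > 0" unfolding t_def by simp
  have aL: "a ^ L = real n" unfolding a_def using n L by (intro powr_inv_pow) auto
  have tL: "t ^ L = 2" unfolding t_def using L by (intro powr_inv_pow) auto
  have b1: "\<beta> \<ge> 1" unfolding \<beta>_def by simp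
  have ebeta: "a + 2 * e \<le> a * \<beta>" using eb unfolding a_def[symmetric] \<beta>_def
    by (simp add: field_simps)
  have mue: "\<mu> \<le> a + e"
  proof (rule ccontr)
    assume "\<not> \<mu> \<le> a + e"
    hence h: "a < \<mu> - e" "a \<le> \<mu>" using e0 by auto
    have "a ^ (L-1) \<le> \<mu> ^ (L-1)" using h a0 by (intro power_mono) auto
    have "real n = a ^ (L-1) * a" using aL Lj by (simp add: power_Suc2 del: power_Suc)
    also have "\<dots> < a ^ (L-1) * (\<mu> - e)" using h a0 by simp
    also have "\<dots> \<le> \<mu> ^ (L-1) * (\<mu> - e)" using \<open>a ^ (L-1) \<le> \<mu> ^ (L-1)\<close> h a0 by (intro mult_right_mono) auto
    finally show False using star by simp
  qed
  have mub: "\<mu> + e \<le> a * \<beta>" "\<mu> \<le> a * \<beta>" using mue ebeta e0 by auto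
  have bLL: "\<beta> ^ (L * L) \<le> 2" unfolding \<beta>_def using L by (intro beta_bound) auto
  have "(\<beta> ^ (L-1)) ^ L = \<beta> ^ ((L-1) * L)" by (simp add: power_mult)
  also have "\<dots> \<le> \<beta> ^ (L * L)" using b1 L by (intro power_increasing) auto
  also have "\<dots> \<le> t ^ L" using bLL tL by simp
  finally have "(\<beta> ^ (L-1)) ^ L \<le> t ^ L" .
  hence bt: "\<beta> ^ (L-1) \<le> t" using t0 Lj power_le_imp_le_base[of "\<beta> ^ (L-1)" "Suc j" t] by simp
  have bb: "\<beta> \<le> \<beta> ^ (L-1)" using b1 L power_increasing[of 1 "L-1" \<beta>] by simp
  have at: "a * \<beta> \<le> a * t" using bb bt a0 by simp
  have two: "(2 * real n) powr (1 / real L) = t * a" unfolding t_def a_def using n by (simp add: powr_mult)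
  show "\<mu> \<le> (2 * real n) powr (1 / real L)" "\<mu> + e \<le> (2 * real n) powr (1 / real L)"
    unfolding two using mub at by (simp_all add: mult.commute)
  have half: "(real n / 2) powr (1 / real L) = a / t" unfolding t_def a_def using n by (simp add: powr_divide)
  have "(\<mu> + e) * \<mu>^(L-2) \<le> (a * \<beta>) * (a * \<beta>)^(L-2)"
    using mub mu e0 a0 b1 by (intro mult_mono power_mono) auto
  also have "\<dots> = (a * \<beta>)^(L-1)" using Lj by simp
  finally have h1: "(\<mu> + e) * \<mu>^(L-2) \<le> (a * \<beta>)^(L-1)" .
  have "a / t * ((\<mu> + e) * \<mu>^(L-2)) \<le> a / t * (a * \<beta>)^(L-1)"
    using h1 a0 t0 by (intro mult_left_mono) auto
  also have "\<dots> = a ^ L * (\<beta> ^ (L-1) / t)" using Lj t0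
    by (simp add: power_mult_distrib field_simps)
  also have "\<dots> \<le> a ^ L * 1" using bt t0 a0 by (intro mult_left_mono) auto
  finally show "(real n / 2) powr (1 / real L) * ((\<mu> + e) * \<mu>^(L-2)) \<le> real n" unfolding half aL by simp
qed



lemma wprod_carrier:
  assumes "\<forall>l\<in>{1..<L}. W l \<in> carrier_mat d d" "l < L"
  shows "wprod W l d \<in> carrier_mat d d"
  using assms(2)
proof (induction l)
  case 0 thus ?case by simp
next
  case (Suc l)
  have "W (Suc l) \<in> carrier_mat d d" using assms(1) Suc.prems by auto
  thus ?case using Suc by simp
qed

lemma wprod_L:
  assumes "\<forall>l\<in>{1..<L}. W l \<in> carrier_mat d d" "W L \<in> carrier_mat K d" "0 < L"
  shows "wprod W L d \<in> carrier_mat K d"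
proof -
  obtain m where L: "L = Suc m" using assms(3) by (cases L) auto
  have "wprod W m d \<in> carrier_mat d d" using wprod_carrier[OF assms(1)] L by simp
  thus ?thesis using assms(2) L by simp
qed

theorem lemma3:
  fixes K n L d :: nat and X :: "real mat" and W :: "nat \<Rightarrow> real mat" and \<epsilon> :: real
  assumes "K > 0" and "n > 0" and "L > 0"
    and d_def: "d = n * K"
    and "d > K"
    and "orthogonal_mat d X"
    and "\<forall>l\<in>{1..<L}. W l \<in> carrier_mat d d"
    and "W L \<in> carrier_mat K d"
    and "wprod W L d * X = label_mat K n"
    and "\<epsilon> > 0"
    and "\<epsilon> \<le> real n powr (1 / (2 * real L)) / (sqrt 30 * real L * (real d - real K) powr (1/4))"
    and "\<epsilon> \<le> (real n / 2) powr (1 / (4 * real L)) / (real d - real K) powr (1/4)"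
    and "\<epsilon> \<le> 1 / sqrt (2 * (sqrt (real K) + 1))"
    and "\<forall>l\<in>{1..L-2}. transpose_mat (W (l+1)) * W (l+1) = W l * transpose_mat (W l)"
    and "frob_norm (transpose_mat (W L) * W L - W (L-1) * transpose_mat (W (L-1)))
           \<le> \<epsilon>^2 * sqrt (real d - real K)"
  shows "\<forall>l\<in>{1..L}. sqrt (real n / 2) powr (1 / real L) \<le> sigma K (W l)
            \<and> sigma K (W l) \<le> sigma 1 (W l)
            \<and> sigma 1 (W l) \<le> sqrt (2 * real n) powr (1 / real L)"
proof -
  note K = assms(1) and n = assms(2) and L0 = assms(3) and dK = assms(5) and orth = assms(6)
    and Wc = assms(7) and WL = assms(8) and prodY = assms(9) and eps0 = assms(10) and eps1 = assms(11)
    and bal = assms(14) and fr = assms(15)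
  have d0: "d > 0" using dK by simp
  have Xc: "X \<in> carrier_mat d d" and XTX: "transpose_mat X * X = 1\<^sub>m d"
    using orth unfolding orthogonal_mat_def by auto
  have XXT: "X * transpose_mat X = 1\<^sub>m d"
    using mat_mult_left_right_inverse[of "transpose_mat X" d X] Xc XTX by simp
  define Y where "Y = label_mat K n"
  have Yc: "Y \<in> carrier_mat K d" unfolding Y_def d_def by (simp add: label_mat_def)
  have YYT: "Y * transpose_mat Y = real n \<cdot>\<^sub>m 1\<^sub>m K" unfolding Y_def by (rule label_YYT[OF n])
  define P where "P = wprod W L d"
  have Pc: "P \<in> carrier_mat K d" unfolding P_def by (rule wprod_L[OF Wc WL L0])
  have PY: "P = Y * transpose_mat X"
  proof -
    have "P = P * (X * transpose_mat X)" using Pc XXT by simp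
    also have "\<dots> = (P * X) * transpose_mat X" using Pc Xc by (simp add: assoc_mult_mat[of _ K d _ d _ d])
    finally show ?thesis using prodY unfolding P_def Y_def by simp
  qed
  have Pup: "\<forall>x\<in>carrier_vec d. (P *\<^sub>v x) \<bullet> (P *\<^sub>v x) \<le> real n * (x \<bullet> x)"
  proof
    fix x :: "real vec" assume x: "x \<in> carrier_vec d"
    define w where "w = transpose_mat X *\<^sub>v x"
    have w: "w \<in> carrier_vec (n * K)" unfolding w_def using Xc x d_def by simp
    have Pxw: "P *\<^sub>v x = Y *\<^sub>v w" unfolding PY w_def using Yc Xc x
      by (simp add: assoc_mult_mat_vec[of _ K d _ d])
    have ww: "w \<bullet> w = x \<bullet> x" unfolding w_def using nsq_mult_T[OF Xc x] XXT x by simp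
    show "(P *\<^sub>v x) \<bullet> (P *\<^sub>v x) \<le> real n * (x \<bullet> x)"
      using label_bound[OF n w] unfolding Pxw ww Y_def .
  qed
  define B0 where "B0 = X * transpose_mat Y"
  have B0c: "B0 \<in> carrier_mat d K" unfolding B0_def using Xc Yc by simp
  have PB0: "P * B0 = real n \<cdot>\<^sub>m 1\<^sub>m K"
  proof -
    have "P * B0 = Y * (transpose_mat X * X) * transpose_mat Y" unfolding PY B0_def using Xc Yc
      by (simp add: assoc_mult_mat[of _ K d _ d _ K] assoc_mult_mat[of _ d d _ d _ K] assoc_mult_mat[of _ K d _ d _ d])
    also have "\<dots> = real n \<cdot>\<^sub>m 1\<^sub>m K" using XTX Yc YYT by simp
    finally show ?thesis .
  qed
  have B0TB0: "transpose_mat B0 * B0 = real n \<cdot>\<^sub>m 1\<^sub>m K"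
  proof -
    have "transpose_mat B0 * B0 = Y * (transpose_mat X * X) * transpose_mat Y" unfolding B0_def using Xc Yc
      by (simp add: transpose_mult[of X d d _ K] assoc_mult_mat[of _ K d _ d _ K] assoc_mult_mat[of _ K d _ d _ d])
    also have "\<dots> = real n \<cdot>\<^sub>m 1\<^sub>m K" using XTX Yc YYT by simp
    finally show ?thesis .
  qed
  have PBz: "P *\<^sub>v (B0 *\<^sub>v z) = real n \<cdot>\<^sub>v z" if z: "z \<in> carrier_vec K" for z
  proof -
    have "P *\<^sub>v (B0 *\<^sub>v z) = (P * B0) *\<^sub>v z" using Pc B0c z by (simp add: assoc_mult_mat_vec[of _ K d _ K])
    thus ?thesis unfolding PB0 using z by auto
  qed
  have B0n: "(B0 *\<^sub>v z) \<bullet> (B0 *\<^sub>v z) = real n * (z \<bullet> z)" if z: "z \<in> carrier_vec K" for z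
  proof -
    have "(real n \<cdot>\<^sub>m 1\<^sub>m K) *\<^sub>v z = real n \<cdot>\<^sub>v z" using z by auto
    thus ?thesis using nsq_mult[OF B0c z] unfolding B0TB0 using z by simp
  qed
  have Peq: "\<forall>z\<in>carrier_vec K. (P *\<^sub>v (B0 *\<^sub>v z)) \<bullet> (P *\<^sub>v (B0 *\<^sub>v z)) = real n * ((B0 *\<^sub>v z) \<bullet> (B0 *\<^sub>v z))"
    using PBz B0n by (simp add: power2_eq_square)
  have Pnz: "\<forall>z\<in>carrier_vec K. z \<noteq> 0\<^sub>v K \<longrightarrow> P *\<^sub>v (B0 *\<^sub>v z) \<noteq> 0\<^sub>v K"
  proof (intro ballI impI)
    fix z :: "real vec" assume z: "z \<in> carrier_vec K" "z \<noteq> 0\<^sub>v K"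
    have "real n \<cdot>\<^sub>v z \<noteq> 0\<^sub>v K"
    proof
      assume a: "real n \<cdot>\<^sub>v z = 0\<^sub>v K"
      have "z = 0\<^sub>v K"
      proof (rule eq_vecI)
        fix i assume "i < dim_vec (0\<^sub>v K :: real vec)"
        hence i: "i < K" by simp
        from arg_cong[OF a, of "\<lambda>v. v $ i"] have "real n * z $ i = 0" using z(1) i by simp
        thus "z $ i = 0\<^sub>v K $ i" using n i by simp
      qed (use z in simp)
      thus False using z by simp
    qed
    thus "P *\<^sub>v (B0 *\<^sub>v z) \<noteq> 0\<^sub>v K" using PBz z by simp
  qed
  have Kd: "K \<le> d" using dK by simp
  have P0: "P *\<^sub>v 0\<^sub>v d = 0\<^sub>v K" using Pc by (intro eq_vecI) (auto simp: scalar_prod_def)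
  have B0inj: "\<forall>z\<in>carrier_vec K. z \<noteq> 0\<^sub>v K \<longrightarrow> B0 *\<^sub>v z \<noteq> 0\<^sub>v d"
    using Pnz P0 by metis
  show ?thesis
  proof (cases "L = 1")
    case True
    have W1: "W 1 = P" unfolding P_def True using WL True by simp
    have W1c: "W 1 \<in> carrier_mat K d" using W1 Pc by simp
    have up: "sigma 1 (W 1) \<le> sqrt (real n)"
      by (rule sigma_upper[OF W1c]) (use Pup W1 d0 in auto)
    have lo: "sqrt (real n) \<le> sigma K (W 1)"
      by (rule sigma_lower[OF W1c B0c K Kd]) (use B0inj Peq W1 in auto)
    have mid: "sigma K (W 1) \<le> sigma 1 (W 1)" by (rule sigma_mono[OF W1c]) (use K Kd in auto)
    have h1: "sqrt (real n / 2) \<le> sqrt (real n)" by simp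
    have h2: "sqrt (real n) \<le> sqrt (2 * real n)" by simp
    show ?thesis using mid True order_trans[OF h1 lo] order_trans[OF up h2] by auto
  next
    case False
    hence L2: "L \<ge> 2" using L0 by simp
    define e where "e = \<epsilon>^2 * sqrt (real d - real K)"
    have fr': "frob_norm (transpose_mat (W L) * W L - W (L-1) * transpose_mat (W (L-1))) \<le> e"
      using fr unfolding e_def .
    obtain \<mu> where mu: "0 < \<mu>" "\<mu>^(L-1) * (\<mu> - e) \<le> real n"
      and lay: "\<forall>l\<in>{1..<L}. \<forall>y\<in>carrier_vec d. (W l *\<^sub>v y) \<bullet> (W l *\<^sub>v y) \<le> \<mu> * (y \<bullet> y)"
      and lastb: "\<forall>y\<in>carrier_vec d. (W L *\<^sub>v y) \<bullet> (W L *\<^sub>v y) \<le> (\<mu> + e) * (y \<bullet> y)"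
      and low: "\<forall>l\<in>{1..L}. \<forall>z\<in>carrier_vec K.
        real n * ((wprod W (l-1) d *\<^sub>v (B0 *\<^sub>v z)) \<bullet> (wprod W (l-1) d *\<^sub>v (B0 *\<^sub>v z)))
          \<le> (\<mu> + e) * \<mu>^(L-2) * ((W l *\<^sub>v (wprod W (l-1) d *\<^sub>v (B0 *\<^sub>v z))) \<bullet> (W l *\<^sub>v (wprod W (l-1) d *\<^sub>v (B0 *\<^sub>v z))))
        \<and> (z \<noteq> 0\<^sub>v K \<longrightarrow> wprod W (l-1) d *\<^sub>v (B0 *\<^sub>v z) \<noteq> 0\<^sub>v d)"
      using core[OF L2 d0 K n Wc WL bal fr' Pup[unfolded P_def] B0c Peq[unfolded P_def] Pnz[unfolded P_def]]
      by blast
    have e0: "0 \<le> e" unfolding e_def using dK by (intro mult_nonneg_nonneg) auto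
    have eb: "e \<le> real n powr (1 / real L) / (30 * real L ^ 2)"
    proof -
      define s where "s = real d - real K"
      have s0: "s > 0" unfolding s_def using dK by simp
      define q where "q = s powr (1/4)"
      have q0: "q > 0" unfolding q_def using s0 by simp
      have qq: "q^2 = sqrt s" unfolding q_def using s0
        by (simp add: power2_eq_square powr_add[symmetric] powr_half_sqrt[symmetric])
      have aa: "(real n powr (1 / (2 * real L)))^2 = real n powr (1 / real L)"
        using n by (simp add: power2_eq_square powr_add[symmetric])
      have "\<epsilon>^2 \<le> (real n powr (1 / (2 * real L)) / (sqrt 30 * real L * q))^2"
        using eps1 eps0 unfolding q_def s_def by (intro power_mono) auto
      also have "\<dots> = real n powr (1 / real L) / (30 * real L ^ 2 * sqrt s)"
        using qq aa by (simp add: power_divide power_mult_distrib)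
      finally have "\<epsilon>^2 * sqrt s \<le> real n powr (1 / real L) / (30 * real L ^ 2 * sqrt s) * sqrt s"
        by (rule mult_right_mono) (use s0 in simp)
      also have "\<dots> = real n powr (1 / real L) / (30 * real L ^ 2)" using s0 by simp
      finally show ?thesis unfolding e_def s_def .
    qed
    note A = arith_main[OF L2 n mu(1) e0 eb mu(2)]
    define c where "c = (real n / 2) powr (1 / real L)"
    have C0: "0 < (\<mu> + e) * \<mu>^(L-2)" using mu(1) e0 by simp
    have sq2: "sqrt (2 * real n) powr (1 / real L) = sqrt ((2 * real n) powr (1 / real L))" by (simp add: sqrt_powr)
    have sqh: "sqrt (real n / 2) powr (1 / real L) = sqrt c" unfolding c_def by (simp add: sqrt_powr)
    show ?thesis
    proof
      fix l assume l: "l \<in> {1..L}"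
      define r where "r = (if l = L then K else d)"
      have Wl: "W l \<in> carrier_mat r d" unfolding r_def using Wc WL l by auto
      have up: "sigma 1 (W l) \<le> sqrt ((2 * real n) powr (1 / real L))"
      proof (cases "l = L")
        case True
        have "sigma 1 (W l) \<le> sqrt (\<mu> + e)"
          by (rule sigma_upper[OF Wl]) (use lastb True d0 in auto)
        thus ?thesis using A(2) by (meson order_trans real_sqrt_le_iff)
      next
        case False
        hence "l \<in> {1..<L}" using l by simp
        hence "sigma 1 (W l) \<le> sqrt \<mu>"
          by (intro sigma_upper[OF Wl]) (use lay d0 in auto)
        thus ?thesis using A(1) by (meson order_trans real_sqrt_le_iff)
      qed
      define B where "B = wprod W (l-1) d * B0"
      have "l - 1 < L" using l L0 by auto
      hence Pl: "wprod W (l-1) d \<in> carrier_mat d d" by (rule wprod_carrier[OF Wc])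
      have Bc: "B \<in> carrier_mat d K" unfolding B_def using Pl B0c by simp
      have Bz: "B *\<^sub>v z = wprod W (l-1) d *\<^sub>v (B0 *\<^sub>v z)" if "z \<in> carrier_vec K" for z
        unfolding B_def using Pl B0c that by (simp add: assoc_mult_mat_vec[of _ d d _ K])
      have lo: "sqrt c \<le> sigma K (W l)"
      proof (rule sigma_lower[OF Wl Bc K Kd])
        show "\<forall>z\<in>carrier_vec K. z \<noteq> 0\<^sub>v K \<longrightarrow> B *\<^sub>v z \<noteq> 0\<^sub>v d" using low l Bz by auto
        show "\<forall>z\<in>carrier_vec K. c * ((B *\<^sub>v z) \<bullet> (B *\<^sub>v z)) \<le> (W l *\<^sub>v (B *\<^sub>v z)) \<bullet> (W l *\<^sub>v (B *\<^sub>v z))"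
        proof
          fix z :: "real vec" assume z: "z \<in> carrier_vec K"
          define C where "C = (\<mu> + e) * \<mu>^(L-2)"
          define x where "x = B *\<^sub>v z"
          have x: "x \<in> carrier_vec d" unfolding x_def using Bc z by simp
          have h: "real n * (x \<bullet> x) \<le> C * ((W l *\<^sub>v x) \<bullet> (W l *\<^sub>v x))"
            using low l z unfolding x_def C_def Bz[OF z] by auto
          have cC: "c * C \<le> real n" using A(3) unfolding c_def C_def .
          have "(c * (x \<bullet> x)) * C \<le> real n * (x \<bullet> x)"
          proof -
            have "(c * C) * (x \<bullet> x) \<le> real n * (x \<bullet> x)"
              using cC sprod_self_nonneg[OF x] by (rule mult_right_mono)
            thus ?thesis by (simp add: mult_ac)
          qed
          also have "\<dots> \<le> ((W l *\<^sub>v x) \<bullet> (W l *\<^sub>v x)) * C" using h by (simp add: mult.commute)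
          finally have "(c * (x \<bullet> x)) * C \<le> ((W l *\<^sub>v x) \<bullet> (W l *\<^sub>v x)) * C" .
          thus "c * ((B *\<^sub>v z) \<bullet> (B *\<^sub>v z)) \<le> (W l *\<^sub>v (B *\<^sub>v z)) \<bullet> (W l *\<^sub>v (B *\<^sub>v z))"
            using C0 unfolding x_def C_def by (rule mult_right_le_imp_le)
        qed
      qed
      have mid: "sigma K (W l) \<le> sigma 1 (W l)" by (rule sigma_mono[OF Wl]) (use K Kd in auto)
      show "sqrt (real n / 2) powr (1 / real L) \<le> sigma K (W l)
            \<and> sigma K (W l) \<le> sigma 1 (W l)
            \<and> sigma 1 (W l) \<le> sqrt (2 * real n) powr (1 / real L)"
        using up lo mid sq2 sqh by simp
    qed
  qed
qed

end
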